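(* For any choice of entropy function $\phi$, function $\lambda:\mathbb{R}_+\to\mathbb{R}$, exponents $p,q>0$ and distance $\Delta$ on $\mathbb{R}_+$, and for any mm-spaces $\mathcal{X},\mathcal{Y}$, one has $\mathrm{UGW}(\mathcal{X},\mathcal{Y})\geq\mathrm{CGW}(\mathcal{X},\mathcal{Y})$.
   Context: An mm-space $\mathcal{X}=(X,d_X,\mu)$ is a complete separable metric space with a positive (finite) Borel measure. An entropy function is convex, lower semicontinuous $\phi:\mathbb{R}_+\to[0,+\infty]$ with $\phi(1)=0$ and $\phi'_\infty=\lim_{r\to\infty}\phi(r)/r$. For positive measures $\alpha,\beta$ on $Z$ with $\alpha=\frac{d\alpha}{d\beta}\beta+\alpha^\perp$: $D_\phi(\alpha|\beta)=\int\phi(\frac{d\alpha}{d\beta})d\beta+\phi'_\infty\alpha^\perp(Z)$, $D^\otimes_\phi(\alpha|\beta)=D_\phi(\alpha\otimes\alpha|\beta\otimes\beta)$. With $\Gamma(x,x',y,y')=\Delta(d_X(x,x'),d_Y(y,y'))$: $\mathrm{UGW}(\mathcal{X},\mathcal{Y})=\inf_{\pi\in\mathcal{M}_+(X\times Y)}\int\lambda(\Gamma)\,d\pi\,d\pi+D^\otimes_\phi(\pi_1|\mu)+D^\otimes_\phi(\pi_2|\nu)$, where $\pi_1,\pi_2$ are the marginals. Reverse entropy: $\psi(r)=r\phi(1/r)$, $\psi(0)=\phi'_\infty$, $\psi'_\infty=\phi(0)$; $L_c(r,s)=c+\psi(r)+\psi(s)$; $H_c(r,s)=\inf_{\theta\ge0}\theta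 L_c(r/\theta,s/\theta)$ (value at $\theta=0$ being $\psi'_\infty(r+s)$). Cone $\mathcal{C}[Z]=(Z\times\mathbb{R}_+)/(Z\times\{0\})$, points $[z,r]$. On $\mathcal{C}[\mathbb{R}_+]$: $\mathcal{D}([a,u],[b,v])^q=H_{\lambda(\Delta(a,b))}(u^p,v^p)$. $\mathcal{U}_p(\mu,\nu)$: the $\alpha\in\mathcal{M}_+(\mathcal{C}[X]\times\mathcal{C}[Y])$ with $\int\xi(x)r^p\,d\alpha=\int\xi\,d\mu$ and $\int\zeta(y)s^p\,d\alpha=\int\zeta\,d\nu$ for all continuous bounded $\xi,\zeta$. $\mathrm{CGW}(\mathcal{X},\mathcal{Y})=\inf_{\alpha\in\mathcal{U}_p(\mu,\nu)}\int\mathcal{D}([d_X(x,x'),rr'],[d_Y(y,y'),ss'])^q\,d\alpha\,d\alpha$. *)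

theory Defs
  imports "HOL-Analysis.Analysis"
begin

text \<open>An entropy function phi : R_+ -> [0,+oo], convex, lower semicontinuous on [0,oo),
  with phi 1 = 0. Values at negative arguments are irrelevant.\<close>

definition convex_on_nonneg :: "(real \<Rightarrow> ennreal) \<Rightarrow> bool" where
  "convex_on_nonneg \<phi> \<longleftrightarrow>
     (\<forall>x y t. 0 \<le> x \<longrightarrow> 0 \<le> y \<longrightarrow> 0 \<le> t \<longrightarrow> t \<le> 1 \<longrightarrow>
        \<phi> (t * x + (1 - t) * y) \<le> ennreal t * \<phi> x + ennreal (1 - t) * \<phi> y)"

definition lsc_on_nonneg :: "(real \<Rightarrow> ennreal) \<Rightarrow> bool" where
  "lsc_on_nonneg \<phi> \<longleftrightarrow>
     (\<forall>x X. 0 \<le> x \<longrightarrow> (\<forall>n. 0 \<le> X n) \<longrightarrow> X \<longlonglongrightarrow> x \<longrightarrow>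
        \<phi> x \<le> liminf (\<lambda>n. \<phi> (X n)))"

definition entropy_fn :: "(real \<Rightarrow> ennreal) \<Rightarrow> bool" where
  "entropy_fn \<phi> \<longleftrightarrow> convex_on_nonneg \<phi> \<and> lsc_on_nonneg \<phi> \<and> \<phi> 1 = 0"

definition phi_inf :: "(real \<Rightarrow> ennreal) \<Rightarrow> ennreal" where
  "phi_inf \<phi> = Lim at_top (\<lambda>r. \<phi> r / ennreal r)"

definition leb_decomp :: "'a measure \<Rightarrow> 'a measure \<Rightarrow> ('a \<Rightarrow> real) \<Rightarrow> 'a measure \<Rightarrow> bool" where
  "leb_decomp \<beta> \<alpha> f \<alpha>s \<longleftrightarrow>
     f \<in> borel_measurable \<beta> \<and> (\<forall>x. 0 \<le> f x) \<and> sets \<alpha>s = sets \<beta> \<and>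
     (\<exists>N\<in>sets \<beta>. emeasure \<beta> N = 0 \<and> emeasure \<alpha>s (space \<beta> - N) = 0) \<and>
     (\<forall>A\<in>sets \<beta>. emeasure \<alpha> A = (\<integral>\<^sup>+x\<in>A. ennreal (f x) \<partial>\<beta>) + emeasure \<alpha>s A)"

definition D_phi :: "(real \<Rightarrow> ennreal) \<Rightarrow> 'a measure \<Rightarrow> 'a measure \<Rightarrow> ennreal" where
  "D_phi \<phi> \<alpha> \<beta> = (SOME v. \<exists>f \<alpha>s. leb_decomp \<beta> \<alpha> f \<alpha>s \<and>
       v = (\<integral>\<^sup>+x. \<phi> (f x) \<partial>\<beta>) + phi_inf \<phi> * emeasure \<alpha>s (space \<beta>))"

definition D_phi_tensor :: "(real \<Rightarrow> ennreal) \<Rightarrow> 'a measure \<Rightarrow> 'a measure \<Rightarrow> ennreal" where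
  "D_phi_tensor \<phi> \<alpha> \<beta> = D_phi \<phi> (\<alpha> \<Otimes>\<^sub>M \<alpha>) (\<beta> \<Otimes>\<^sub>M \<beta>)"

text \<open>Integral of an extended-real valued function: positive part minus negative part,
  with the convention oo - oo = +oo (ill-defined integrals count as +oo).\<close>
definition sint :: "'a measure \<Rightarrow> ('a \<Rightarrow> ereal) \<Rightarrow> ereal" where
  "sint M f = (let P = (\<integral>\<^sup>+x. e2ennreal (f x) \<partial>M); N = (\<integral>\<^sup>+x. e2ennreal (- f x) \<partial>M)
     in if P = \<infinity> \<and> N = \<infinity> then \<infinity> else enn2ereal P - enn2ereal N)"

definition mm_space :: "'a::polish_space measure \<Rightarrow> bool" where
  "mm_space \<mu> \<longleftrightarrow> sets \<mu> = sets borel \<and> finite_measure \<mu>"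

definition dist_on_nonneg :: "(real \<Rightarrow> real \<Rightarrow> real) \<Rightarrow> bool" where
  "dist_on_nonneg \<Delta> \<longleftrightarrow>
     (\<forall>a b. 0 \<le> a \<longrightarrow> 0 \<le> b \<longrightarrow> 0 \<le> \<Delta> a b \<and> (\<Delta> a b = 0 \<longleftrightarrow> a = b) \<and> \<Delta> a b = \<Delta> b a) \<and>
     (\<forall>a b c. 0 \<le> a \<longrightarrow> 0 \<le> b \<longrightarrow> 0 \<le> c \<longrightarrow> \<Delta> a c \<le> \<Delta> a b + \<Delta> b c)"

definition UGW_obj :: "(real \<Rightarrow> ennreal) \<Rightarrow> (real \<Rightarrow> real) \<Rightarrow> (real \<Rightarrow> real \<Rightarrow> real)
    \<Rightarrow> 'a::polish_space measure \<Rightarrow> 'b::polish_space measure \<Rightarrow> ('a \<times> 'b) measure \<Rightarrow> ereal" where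
  "UGW_obj \<phi> lam \<Delta> \<mu> \<nu> \<pi> =
     sint (\<pi> \<Otimes>\<^sub>M \<pi>) (\<lambda>((x, y), (x', y')). ereal (lam (\<Delta> (dist x x') (dist y y'))))
     + enn2ereal (D_phi_tensor \<phi> (distr \<pi> borel fst) \<mu>)
     + enn2ereal (D_phi_tensor \<phi> (distr \<pi> borel snd) \<nu>)"

definition UGW :: "(real \<Rightarrow> ennreal) \<Rightarrow> (real \<Rightarrow> real) \<Rightarrow> (real \<Rightarrow> real \<Rightarrow> real)
    \<Rightarrow> 'a::polish_space measure \<Rightarrow> 'b::polish_space measure \<Rightarrow> ereal" where
  "UGW \<phi> lam \<Delta> \<mu> \<nu> =
     (INF \<pi> \<in> {\<pi> :: ('a \<times> 'b) measure. sets \<pi> = sets borel \<and> finite_measure \<pi>}.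
        UGW_obj \<phi> lam \<Delta> \<mu> \<nu> \<pi>)"

definition psi :: "(real \<Rightarrow> ennreal) \<Rightarrow> real \<Rightarrow> ennreal" where
  "psi \<phi> r = (if r = 0 then phi_inf \<phi> else ennreal r * \<phi> (1 / r))"

definition L_c :: "(real \<Rightarrow> ennreal) \<Rightarrow> real \<Rightarrow> real \<Rightarrow> real \<Rightarrow> ereal" where
  "L_c \<phi> c r s = ereal c + enn2ereal (psi \<phi> r) + enn2ereal (psi \<phi> s)"

text \<open>H_c(r,s) = inf_{theta >= 0} theta L_c(r/theta, s/theta), value at theta = 0 being
  psi'_oo (r+s) = phi(0) (r+s).\<close>
definition H_c :: "(real \<Rightarrow> ennreal) \<Rightarrow> real \<Rightarrow> real \<Rightarrow> real \<Rightarrow> ereal" where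
  "H_c \<phi> c r s = (INF \<theta> \<in> {0..}.
     (if \<theta> = 0 then enn2ereal (\<phi> 0 * ennreal (r + s))
      else ereal \<theta> * L_c \<phi> c (r / \<theta>) (s / \<theta>)))"

text \<open>The q-th power of the cone distance on C[R_+]:
  D([a,u],[b,v])^q = H_{lam(Delta(a,b))}(u^p, v^p).\<close>
definition cone_D_pow_q :: "(real \<Rightarrow> ennreal) \<Rightarrow> (real \<Rightarrow> real) \<Rightarrow> (real \<Rightarrow> real \<Rightarrow> real) \<Rightarrow> real
    \<Rightarrow> real \<Rightarrow> real \<Rightarrow> real \<Rightarrow> real \<Rightarrow> ereal" where
  "cone_D_pow_q \<phi> lam \<Delta> p a u b v = H_c \<phi> (lam (\<Delta> a b)) (u powr p) (v powr p)"

text \<open>Measures on C[X] x C[Y] are represented by measures on (X x R) x (Y x R)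
  concentrated on (X x R_+) x (Y x R_+).\<close>
definition U_p :: "real \<Rightarrow> 'a::polish_space measure \<Rightarrow> 'b::polish_space measure
    \<Rightarrow> ((('a \<times> real) \<times> ('b \<times> real)) measure) set" where
  "U_p p \<mu> \<nu> = {\<alpha>. sets \<alpha> = sets borel \<and> finite_measure \<alpha> \<and>
      emeasure \<alpha> {((x, r), (y, s)). r < 0 \<or> s < 0} = 0 \<and>
      (\<forall>\<xi> :: 'a \<Rightarrow> real. continuous_on UNIV \<xi> \<and> bounded (range \<xi>) \<longrightarrow>
         integrable \<alpha> (\<lambda>((x, r), (y, s)). \<xi> x * r powr p) \<and>
         (\<integral>((x, r), (y, s)). \<xi> x * r powr p \<partial>\<alpha>) = (\<integral>x. \<xi> x \<partial>\<mu>)) \<and>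
      (\<forall>\<zeta> :: 'b \<Rightarrow> real. continuous_on UNIV \<zeta> \<and> bounded (range \<zeta>) \<longrightarrow>
         integrable \<alpha> (\<lambda>((x, r), (y, s)). \<zeta> y * s powr p) \<and>
         (\<integral>((x, r), (y, s)). \<zeta> y * s powr p \<partial>\<alpha>) = (\<integral>y. \<zeta> y \<partial>\<nu>))}"

definition CGW_obj :: "(real \<Rightarrow> ennreal) \<Rightarrow> (real \<Rightarrow> real) \<Rightarrow> (real \<Rightarrow> real \<Rightarrow> real) \<Rightarrow> real
    \<Rightarrow> (('a::metric_space \<times> real) \<times> ('b::metric_space \<times> real)) measure \<Rightarrow> ereal" where
  "CGW_obj \<phi> lam \<Delta> p \<alpha> =
     sint (\<alpha> \<Otimes>\<^sub>M \<alpha>) (\<lambda>(((x, r), (y, s)), ((x', r'), (y', s'))).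
        cone_D_pow_q \<phi> lam \<Delta> p (dist x x') (r * r') (dist y y') (s * s'))"

definition CGW :: "(real \<Rightarrow> ennreal) \<Rightarrow> (real \<Rightarrow> real) \<Rightarrow> (real \<Rightarrow> real \<Rightarrow> real) \<Rightarrow> real
    \<Rightarrow> 'a::polish_space measure \<Rightarrow> 'b::polish_space measure \<Rightarrow> ereal" where
  "CGW \<phi> lam \<Delta> p \<mu> \<nu> = (INF \<alpha> \<in> U_p p \<mu> \<nu>. CGW_obj \<phi> lam \<Delta> p \<alpha>)"

end

theory Submission
  imports Defs
begin

lemma nn_le_by_meas:
  assumes "\<And>g. g \<in> borel_measurable M \<Longrightarrow> g \<le> f \<Longrightarrow> (\<forall>x. g x < top) \<Longrightarrow> integral\<^sup>N M g \<le> c"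
  shows "integral\<^sup>N M f \<le> c"
  unfolding nn_integral_def_finite
proof (rule SUP_least)
  fix g assume "g \<in> {g. simple_function M g \<and> g \<le> f \<and> (\<forall>x. g x < top)}"
  then have g: "simple_function M g" "g \<le> f" "\<forall>x. g x < top" by auto
  then show "integral\<^sup>S M g \<le> c"
    using assms[of g] by (simp add: borel_measurable_simple_function nn_integral_eq_simple_integral)
qed

lemma nn_le_by_meas2:
  assumes "\<And>g1 g2. g1 \<in> borel_measurable M1 \<Longrightarrow> g1 \<le> f1 \<Longrightarrow> (\<forall>x. g1 x < top) \<Longrightarrow>
     g2 \<in> borel_measurable M2 \<Longrightarrow> g2 \<le> f2 \<Longrightarrow> (\<forall>x. g2 x < top) \<Longrightarrow>
     integral\<^sup>N M1 g1 + integral\<^sup>N M2 g2 \<le> c"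
  shows "integral\<^sup>N M1 f1 + integral\<^sup>N M2 f2 \<le> c"
proof -
  let ?S1 = "{g. simple_function M1 g \<and> g \<le> f1 \<and> (\<forall>x. g x < top)}"
  let ?S2 = "{g. simple_function M2 g \<and> g \<le> f2 \<and> (\<forall>x. g x < top)}"
  have ne1: "?S1 \<noteq> {}" proof - have "(\<lambda>_. 0) \<in> ?S1" by (auto simp: le_fun_def) then show ?thesis by blast qed
  have ne2: "?S2 \<noteq> {}" proof - have "(\<lambda>_. 0) \<in> ?S2" by (auto simp: le_fun_def) then show ?thesis by blast qed
  have "integral\<^sup>N M1 f1 + integral\<^sup>N M2 f2 = (SUP g1\<in>?S1. integral\<^sup>S M1 g1) + (SUP g2\<in>?S2. integral\<^sup>S M2 g2)"
    unfolding nn_integral_def_finite ..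
  also have "\<dots> = (SUP g1\<in>?S1. integral\<^sup>S M1 g1 + (SUP g2\<in>?S2. integral\<^sup>S M2 g2))"
    using ne1 by (rule ennreal_SUP_add_left[symmetric])
  also have "\<dots> = (SUP g1\<in>?S1. SUP g2\<in>?S2. integral\<^sup>S M1 g1 + integral\<^sup>S M2 g2)"
    using ne2 by (simp add: ennreal_SUP_add_right)
  also have "\<dots> \<le> c"
  proof (intro SUP_least)
    fix g1 g2 assume "g1 \<in> ?S1" "g2 \<in> ?S2"
    then show "integral\<^sup>S M1 g1 + integral\<^sup>S M2 g2 \<le> c"
      using assms[of g1 g2] by (simp add: borel_measurable_simple_function nn_integral_eq_simple_integral)
  qed
  finally show ?thesis .
qed
lemma e2_minf[simp]: "e2ennreal (-\<infinity>) = 0" by (rule e2ennreal_neg) simp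
lemma top_le_ennreal[simp]: "top \<le> ennreal r \<longleftrightarrow> False" by (simp add: top_unique)
lemma er_aux: "0 \<le> b \<Longrightarrow> ennreal r \<le> ennreal (r - b) + ennreal b"
proof (cases "r \<le> b")
  case True
  have "ennreal r \<le> ennreal b" using True by (rule ennreal_leI)
  also have "\<dots> \<le> ennreal (r - b) + ennreal b" by simp
  finally show ?thesis .
qed (auto simp: ennreal_plus[symmetric] simp del: ennreal_plus)
lemma pw4: "(x::ennreal) \<le> (x - a) + a"
  by (simp add: diff_add_self_ennreal nle_le)
lemma pw1: fixes x a :: ennreal and H L :: ereal
  assumes "x \<le> e2ennreal H" "H \<le> L + enn2ereal a" "x < top" shows "x - a \<le> e2ennreal L"
  using assms
  by (cases x rule: ennreal_cases; cases a rule: ennreal_cases; cases H; cases L)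
   (auto simp: ennreal_minus ennreal_le_iff2 ennreal_neg split: if_splits)
lemma pw2: fixes y a :: ennreal and H L :: ereal
  assumes "y \<le> e2ennreal (-L)" "H \<le> L + enn2ereal a" "y < top" shows "y - a \<le> e2ennreal (-H)"
  using assms
  by (cases y rule: ennreal_cases; cases a rule: ennreal_cases; cases H; cases L)
   (auto simp: ennreal_minus ennreal_le_iff2 ennreal_neg split: if_splits)
lemma pw3: fixes x y a :: ennreal and H L :: ereal
  assumes "x \<le> e2ennreal H" "y \<le> e2ennreal (-L)" "H \<le> L + enn2ereal a" 
  shows "x + y \<le> (x - a) + (y - a) + a"
  using assms
  by (cases x rule: ennreal_cases; cases y rule: ennreal_cases; cases a rule: ennreal_cases; cases H; cases L)
   (auto simp: er_aux ennreal_minus ennreal_le_iff2 ennreal_neg ennreal_plus[symmetric] simp del: ennreal_plus split: if_splits)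
lemma sint_arith:
 fixes PH NH PL NL C :: ennreal
 assumes "PH + NL \<le> PL + NH + C" "PH \<le> PL + C" "NL \<le> NH + C"
 shows "(if PH = \<infinity> \<and> NH = \<infinity> then \<infinity> else enn2ereal PH - enn2ereal NH) \<le> (if PL = \<infinity> \<and> NL = \<infinity> then \<infinity> else enn2ereal PL - enn2ereal NL) + enn2ereal C"
  using assms
  by (cases PH rule: ennreal_cases; cases NH rule: ennreal_cases; cases PL rule: ennreal_cases;
      cases NL rule: ennreal_cases; cases C rule: ennreal_cases)
     (auto simp: ennreal_plus[symmetric] simp del: ennreal_plus)
lemma sint_transfer:
  fixes M :: "'w measure" and M' :: "'z measure" and H :: "'w \<Rightarrow> ereal" and Lam :: "'z \<Rightarrow> ereal"
    and R :: "'i \<Rightarrow> 'w measure"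
  assumes T: "T \<in> M' \<rightarrow>\<^sub>M M" and Pj: "Pj \<in> M \<rightarrow>\<^sub>M M'" and PT: "\<And>z. Pj (T z) = z"
    and A: "A \<in> borel_measurable M"
    and HL: "\<And>w. H w \<le> Lam (Pj w) + enn2ereal (A w)"
    and HB: "\<And>i. i \<in> I \<Longrightarrow> AE w in R i. H w \<le> enn2ereal (B w)"
    and split: "\<And>k. k \<in> borel_measurable M \<Longrightarrow>
       integral\<^sup>N M k = integral\<^sup>N M' (\<lambda>z. k (T z)) + (\<Sum>i\<in>I. integral\<^sup>N (R i) k)"
  shows "sint M H \<le> sint M' Lam + enn2ereal (integral\<^sup>N M' (\<lambda>z. A (T z)) + (\<Sum>i\<in>I. integral\<^sup>N (R i) B))"
proof -
  define PH where "PH = (\<integral>\<^sup>+x. e2ennreal (H x) \<partial>M)"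
  define NH where "NH = (\<integral>\<^sup>+x. e2ennreal (- H x) \<partial>M)"
  define PL where "PL = (\<integral>\<^sup>+x. e2ennreal (Lam x) \<partial>M')"
  define NL where "NL = (\<integral>\<^sup>+x. e2ennreal (- Lam x) \<partial>M')"
  define CA where "CA = integral\<^sup>N M' (\<lambda>z. A (T z))"
  define CB where "CB = (\<Sum>i\<in>I. integral\<^sup>N (R i) B)"
  have AT: "(\<lambda>z. A (T z)) \<in> borel_measurable M'" using A T by measurable
  have restB: "(\<Sum>i\<in>I. integral\<^sup>N (R i) g) \<le> CB" if "\<And>w. g w \<le> e2ennreal (H w)" for g
    unfolding CB_def
  proof (rule sum_mono)
    fix i assume i: "i \<in> I"
    show "integral\<^sup>N (R i) g \<le> integral\<^sup>N (R i) B"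
    proof (rule nn_integral_mono_AE)
      show "AE x in R i. g x \<le> B x"
        using HB[OF i]
      proof eventually_elim
        case (elim w)
        have "g w \<le> e2ennreal (H w)" by (rule that)
        also have "\<dots> \<le> e2ennreal (enn2ereal (B w))" using elim by (rule e2ennreal_mono)
        finally show ?case by simp
      qed
    qed
  qed
  have part1: "integral\<^sup>N M' (\<lambda>z. g (T z)) \<le> PL + CA"
    if g: "g \<in> borel_measurable M" "g \<le> (\<lambda>x. e2ennreal (H x))" "\<forall>x. g x < top" for g
  proof -
    have gT: "(\<lambda>z. g (T z)) \<in> borel_measurable M'" using g(1) T by measurable
    have "integral\<^sup>N M' (\<lambda>z. g (T z)) \<le> integral\<^sup>N M' (\<lambda>z. (g (T z) - A (T z)) + A (T z))"
      by (intro nn_integral_mono) (rule pw4)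
    also have "\<dots> = integral\<^sup>N M' (\<lambda>z. g (T z) - A (T z)) + CA"
      unfolding CA_def using gT AT by (intro nn_integral_add) measurable
    also have "integral\<^sup>N M' (\<lambda>z. g (T z) - A (T z)) \<le> PL"
      unfolding PL_def
    proof (intro nn_integral_mono pw1)
      fix z show "g (T z) \<le> e2ennreal (H (T z))" using g(2) by (auto simp: le_fun_def)
      show "H (T z) \<le> Lam z + enn2ereal (A (T z))" using HL[of "T z"] by (simp add: PT)
      show "g (T z) < top" using g(3) by auto
    qed
    finally show ?thesis by (simp add: add_right_mono)
  qed
  have P1: "PH \<le> PL + (CA + CB)"
    unfolding PH_def
  proof (rule nn_le_by_meas)
    fix g assume g: "g \<in> borel_measurable M" "g \<le> (\<lambda>x. e2ennreal (H x))" "\<forall>x. g x < top"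
    have "integral\<^sup>N M g = integral\<^sup>N M' (\<lambda>z. g (T z)) + (\<Sum>i\<in>I. integral\<^sup>N (R i) g)"
      by (rule split[OF g(1)])
    also have "\<dots> \<le> (PL + CA) + CB"
      using part1[OF g] restB[of g] g(2) by (intro add_mono) (auto simp: le_fun_def)
    finally show "integral\<^sup>N M g \<le> PL + (CA + CB)" by (simp add: ac_simps)
  qed
  have part2: "integral\<^sup>N M' (\<lambda>z. h z - A (T z)) \<le> NH"
    if h: "h \<in> borel_measurable M'" "h \<le> (\<lambda>x. e2ennreal (- Lam x))" "\<forall>x. h x < top" for h
  proof -
    define k where "k w = h (Pj w) - A w" for w
    have k: "k \<in> borel_measurable M" unfolding k_def using h(1) Pj A by measurable
    have "integral\<^sup>N M' (\<lambda>z. h z - A (T z)) = integral\<^sup>N M' (\<lambda>z. k (T z))"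
      by (simp add: k_def PT)
    also have "\<dots> \<le> integral\<^sup>N M' (\<lambda>z. k (T z)) + (\<Sum>i\<in>I. integral\<^sup>N (R i) k)" by simp
    also have "\<dots> = integral\<^sup>N M k" by (rule split[OF k, symmetric])
    also have "\<dots> \<le> NH" unfolding NH_def
    proof (intro nn_integral_mono)
      fix w show "k w \<le> e2ennreal (- H w)" unfolding k_def
        using h(2,3) HL[of w] by (intro pw2) (auto simp: le_fun_def)
    qed
    finally show ?thesis .
  qed
  have P2: "NL \<le> NH + (CA + CB)"
    unfolding NL_def
  proof (rule nn_le_by_meas)
    fix h assume h: "h \<in> borel_measurable M'" "h \<le> (\<lambda>x. e2ennreal (- Lam x))" "\<forall>x. h x < top"
    have "integral\<^sup>N M' h \<le> integral\<^sup>N M' (\<lambda>z. (h z - A (T z)) + A (T z))"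
      by (intro nn_integral_mono) (rule pw4)
    also have "\<dots> = integral\<^sup>N M' (\<lambda>z. h z - A (T z)) + CA"
      unfolding CA_def using h(1) AT by (intro nn_integral_add) measurable
    also have "\<dots> \<le> NH + CA" using part2[OF h] by (rule add_right_mono)
    also have "\<dots> \<le> NH + (CA + CB)" by (simp add: add_left_mono)
    finally show "integral\<^sup>N M' h \<le> NH + (CA + CB)" .
  qed
  have P3: "PH + NL \<le> PL + NH + (CA + CB)"
    unfolding PH_def NL_def
  proof (rule nn_le_by_meas2)
    fix g h assume g: "g \<in> borel_measurable M" "g \<le> (\<lambda>x. e2ennreal (H x))" "\<forall>x. g x < top"
      and h: "h \<in> borel_measurable M'" "h \<le> (\<lambda>x. e2ennreal (- Lam x))" "\<forall>x. h x < top"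
    have gT: "(\<lambda>z. g (T z)) \<in> borel_measurable M'" using g(1) T by measurable
    have "integral\<^sup>N M g + integral\<^sup>N M' h = (integral\<^sup>N M' (\<lambda>z. g (T z)) + integral\<^sup>N M' h) + (\<Sum>i\<in>I. integral\<^sup>N (R i) g)"
      using split[OF g(1)] by (simp add: ac_simps)
    also have "integral\<^sup>N M' (\<lambda>z. g (T z)) + integral\<^sup>N M' h = integral\<^sup>N M' (\<lambda>z. g (T z) + h z)"
      using gT h(1) by (intro nn_integral_add[symmetric]) auto
    also have "\<dots> \<le> integral\<^sup>N M' (\<lambda>z. ((g (T z) - A (T z)) + (h z - A (T z))) + A (T z))"
    proof (intro nn_integral_mono pw3)
      fix z show "g (T z) \<le> e2ennreal (H (T z))" using g(2) by (auto simp: le_fun_def)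
      show "h z \<le> e2ennreal (- Lam z)" using h(2) by (auto simp: le_fun_def)
      show "H (T z) \<le> Lam z + enn2ereal (A (T z))" using HL[of "T z"] by (simp add: PT)
    qed
    also have "\<dots> = integral\<^sup>N M' (\<lambda>z. g (T z) - A (T z)) + integral\<^sup>N M' (\<lambda>z. h z - A (T z)) + CA"
    proof -
      have gA: "(\<lambda>z. g (T z) - A (T z)) \<in> borel_measurable M'" using gT AT by measurable
      have hA: "(\<lambda>z. h z - A (T z)) \<in> borel_measurable M'" using h(1) AT by measurable
      show ?thesis unfolding CA_def using gA hA AT by (simp add: nn_integral_add)
    qed
    also have "\<dots> \<le> PL + NH + CA"
    proof (intro add_mono order_refl part2[OF h])
      show "integral\<^sup>N M' (\<lambda>z. g (T z) - A (T z)) \<le> PL"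
        unfolding PL_def
      proof (intro nn_integral_mono pw1)
        fix z show "g (T z) \<le> e2ennreal (H (T z))" using g(2) by (auto simp: le_fun_def)
        show "H (T z) \<le> Lam z + enn2ereal (A (T z))" using HL[of "T z"] by (simp add: PT)
        show "g (T z) < top" using g(3) by auto
      qed
    qed
    also have "(\<Sum>i\<in>I. integral\<^sup>N (R i) g) \<le> CB" using restB[of g] g(2) by (auto simp: le_fun_def)
    finally show "integral\<^sup>N M g + integral\<^sup>N M' h \<le> PL + NH + (CA + CB)"
      by (simp add: ac_simps add_mono)
  qed
  have "sint M H = (if PH = \<infinity> \<and> NH = \<infinity> then \<infinity> else enn2ereal PH - enn2ereal NH)"
    unfolding sint_def PH_def NH_def Let_def by simp
  also have "\<dots> \<le> (if PL = \<infinity> \<and> NL = \<infinity> then \<infinity> else enn2ereal PL - enn2ereal NL) + enn2ereal (CA + CB)"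
    by (rule sint_arith[OF P3 P1 P2])
  also have "\<dots> = sint M' Lam + enn2ereal (CA + CB)"
    unfolding sint_def PL_def NL_def Let_def by simp
  finally show ?thesis unfolding CA_def CB_def .
qed

definition msum :: "'a measure \<Rightarrow> 'a measure \<Rightarrow> 'a measure" where
  "msum A B = measure_of (space A) (sets A) (\<lambda>X. emeasure A X + emeasure B X)"

lemma sets_msum[simp]: "sets (msum A B) = sets A"
  unfolding msum_def by (simp add: sets.space_closed)
lemma space_msum[simp]: "space (msum A B) = space A"
  unfolding msum_def by (simp add: sets.space_closed)
lemma measurable_msum1[simp]: "measurable (msum A B) N = measurable A N"
  by (rule measurable_cong_sets) auto
lemma measurable_msum2[simp]: "measurable N (msum A B) = measurable N A"
  by (rule measurable_cong_sets) auto

lemma emeasure_msum: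
  assumes "sets B = sets A" "X \<in> sets A"
  shows "emeasure (msum A B) X = emeasure A X + emeasure B X"
  unfolding msum_def
proof (rule emeasure_measure_of_sigma)
  show "sigma_algebra (space A) (sets A)" by (rule sets.sigma_algebra_axioms)
  show "positive (sets A) (\<lambda>X. emeasure A X + emeasure B X)" by (simp add: positive_def)
  show "countably_additive (sets A) (\<lambda>X. emeasure A X + emeasure B X)"
    unfolding countably_additive_def
  proof safe
    fix F :: "nat \<Rightarrow> _" assume F: "range F \<subseteq> sets A" "disjoint_family F"
    have FB: "range F \<subseteq> sets B" using F assms by auto
    show "(\<Sum>i. emeasure A (F i) + emeasure B (F i)) = emeasure A (\<Union> (range F)) + emeasure B (\<Union> (range F))"
      using suminf_emeasure[OF F] suminf_emeasure[OF FB F(2)]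
      by (simp add: suminf_add[symmetric])
  qed
qed fact

lemma simple_integral_msum:
  assumes "sets B = sets A" "simple_function A f"
  shows "integral\<^sup>S (msum A B) f = integral\<^sup>S A f + integral\<^sup>S B f"
proof -
  have sp: "space B = space A" using assms(1) by (rule sets_eq_imp_space_eq)
  have fin: "finite (f ` space A)" using assms(2) by (simp add: simple_function_def)
  have meas: "f -` {x} \<inter> space A \<in> sets A" for x using assms(2) by (rule simple_functionD)
  show ?thesis
    unfolding simple_integral_def using fin meas
    by (simp add: sp emeasure_msum[OF assms(1)] distrib_left sum.distrib)
qed

lemma nn_integral_msum:
  assumes sets: "sets B = sets A" and f: "f \<in> borel_measurable A"
  shows "integral\<^sup>N (msum A B) f = integral\<^sup>N A f + integral\<^sup>N B f"
proof -
  obtain U where U: "\<And>i. simple_function A (U i)" "incseq U" "\<And>i x. U i x < top"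
    and sup: "\<And>x. (SUP i. U i x) = f x"
    using borel_measurable_implies_simple_function_sequence'[OF f] by blast
  have fU: "f = (\<lambda>x. SUP i. U i x)" using sup by auto
  have sfB: "simple_function B (U i)" for i
    using U(1)[of i] sets by (simp add: simple_function_def sets_eq_imp_space_eq[OF sets])
  have sfM: "simple_function (msum A B) (U i)" for i
    using U(1)[of i] by (simp add: simple_function_def)
  have mA: "U i \<in> borel_measurable A" for i using U(1) by (rule borel_measurable_simple_function)
  have mB: "U i \<in> borel_measurable B" for i using sfB by (rule borel_measurable_simple_function)
  have mM: "U i \<in> borel_measurable (msum A B)" for i using sfM by (rule borel_measurable_simple_function)
  have "integral\<^sup>N (msum A B) f = (SUP i. integral\<^sup>N (msum A B) (U i))"
    unfolding fU using U(2) mM by (rule nn_integral_monotone_convergence_SUP)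
  also have "\<dots> = (SUP i. integral\<^sup>N A (U i) + integral\<^sup>N B (U i))"
    using sfM U(1) sfB by (simp add: nn_integral_eq_simple_integral simple_integral_msum[OF sets])
  also have "\<dots> = (SUP i. integral\<^sup>N A (U i)) + (SUP i. integral\<^sup>N B (U i))"
    by (rule ennreal_SUP_add) (auto intro!: incseq_nn_integral U(2))
  also have "\<dots> = integral\<^sup>N A f + integral\<^sup>N B f"
    unfolding fU using U(2) mA mB by (simp add: nn_integral_monotone_convergence_SUP)
  finally show ?thesis .
qed

lemma finite_measure_msum:
  assumes "sets B = sets A" "finite_measure A" "finite_measure B"
  shows "finite_measure (msum A B)"
proof (rule finite_measureI)
  have "space A \<in> sets A" by simp
  then show "emeasure (msum A B) (space (msum A B)) \<noteq> \<infinity>"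
    using assms by (simp add: emeasure_msum finite_measure.emeasure_finite sets_eq_imp_space_eq[OF assms(1), symmetric])
qed

lemma msum_pair_left:
  assumes sets: "sets B = sets A" and fin: "finite_measure A" "finite_measure B" "finite_measure C"
  shows "msum A B \<Otimes>\<^sub>M C = msum (A \<Otimes>\<^sub>M C) (B \<Otimes>\<^sub>M C)"
proof (rule measure_eqI)
  interpret C: finite_measure C by fact
  have s1: "sets (B \<Otimes>\<^sub>M C) = sets (A \<Otimes>\<^sub>M C)" using sets by (intro sets_pair_measure_cong) auto
  have s2: "sets (msum A B \<Otimes>\<^sub>M C) = sets (A \<Otimes>\<^sub>M C)" by (intro sets_pair_measure_cong) auto
  show "sets (msum A B \<Otimes>\<^sub>M C) = sets (msum (A \<Otimes>\<^sub>M C) (B \<Otimes>\<^sub>M C))" using s2 by simp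
  fix X assume X: "X \<in> sets (msum A B \<Otimes>\<^sub>M C)"
  have XA: "X \<in> sets (A \<Otimes>\<^sub>M C)" using X s2 by simp
  have XB: "X \<in> sets (B \<Otimes>\<^sub>M C)" using XA s1 by simp
  have m: "(\<lambda>x. emeasure C (Pair x -` X)) \<in> borel_measurable A"
    using XA by (rule C.measurable_emeasure_Pair)
  have "emeasure (msum A B \<Otimes>\<^sub>M C) X = \<integral>\<^sup>+x. emeasure C (Pair x -` X) \<partial>msum A B"
    using X by (rule C.emeasure_pair_measure_alt)
  also have "\<dots> = (\<integral>\<^sup>+x. emeasure C (Pair x -` X) \<partial>A) + (\<integral>\<^sup>+x. emeasure C (Pair x -` X) \<partial>B)"
    using sets m by (rule nn_integral_msum)
  also have "\<dots> = emeasure (A \<Otimes>\<^sub>M C) X + emeasure (B \<Otimes>\<^sub>M C) X"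
    using XA XB by (simp add: C.emeasure_pair_measure_alt)
  also have "\<dots> = emeasure (msum (A \<Otimes>\<^sub>M C) (B \<Otimes>\<^sub>M C)) X"
    using XA s1 by (simp add: emeasure_msum)
  finally show "emeasure (msum A B \<Otimes>\<^sub>M C) X = emeasure (msum (A \<Otimes>\<^sub>M C) (B \<Otimes>\<^sub>M C)) X" .
qed

lemma msum_pair_right:
  assumes sets: "sets B = sets A" and fin: "finite_measure A" "finite_measure B" "finite_measure C"
  shows "C \<Otimes>\<^sub>M msum A B = msum (C \<Otimes>\<^sub>M A) (C \<Otimes>\<^sub>M B)"
proof (rule measure_eqI)
  interpret A: finite_measure A by fact
  interpret B: finite_measure B by fact
  interpret S: finite_measure "msum A B" using finite_measure_msum[OF sets fin(1,2)] .
  have s1: "sets (C \<Otimes>\<^sub>M B) = sets (C \<Otimes>\<^sub>M A)" using sets by (intro sets_pair_measure_cong) auto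
  have s2: "sets (C \<Otimes>\<^sub>M msum A B) = sets (C \<Otimes>\<^sub>M A)" by (intro sets_pair_measure_cong) auto
  show "sets (C \<Otimes>\<^sub>M msum A B) = sets (msum (C \<Otimes>\<^sub>M A) (C \<Otimes>\<^sub>M B))" using s2 by simp
  fix X assume X: "X \<in> sets (C \<Otimes>\<^sub>M msum A B)"
  have XA: "X \<in> sets (C \<Otimes>\<^sub>M A)" using X s2 by simp
  have XB: "X \<in> sets (C \<Otimes>\<^sub>M B)" using XA s1 by simp
  have mA: "(\<lambda>x. emeasure A (Pair x -` X)) \<in> borel_measurable C"
    using XA by (rule A.measurable_emeasure_Pair)
  have mB: "(\<lambda>x. emeasure B (Pair x -` X)) \<in> borel_measurable C"
    using XB by (rule B.measurable_emeasure_Pair)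
  have "emeasure (C \<Otimes>\<^sub>M msum A B) X = \<integral>\<^sup>+x. emeasure (msum A B) (Pair x -` X) \<partial>C"
    using X by (rule S.emeasure_pair_measure_alt)
  also have "\<dots> = \<integral>\<^sup>+x. emeasure A (Pair x -` X) + emeasure B (Pair x -` X) \<partial>C"
    using XA by (intro nn_integral_cong) (simp add: emeasure_msum[OF sets] sets_Pair1)
  also have "\<dots> = emeasure (C \<Otimes>\<^sub>M A) X + emeasure (C \<Otimes>\<^sub>M B) X"
    using XA XB mA mB by (simp add: nn_integral_add A.emeasure_pair_measure_alt B.emeasure_pair_measure_alt)
  also have "\<dots> = emeasure (msum (C \<Otimes>\<^sub>M A) (C \<Otimes>\<^sub>M B)) X"
    using XA s1 by (simp add: emeasure_msum)
  finally show "emeasure (C \<Otimes>\<^sub>M msum A B) X = emeasure (msum (C \<Otimes>\<^sub>M A) (C \<Otimes>\<^sub>M B)) X" .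
qed

lemma ennreal_aux_div: "(k::ennreal) \<noteq> 0 \<Longrightarrow> k \<noteq> \<infinity> \<Longrightarrow> h \<noteq> \<infinity> \<Longrightarrow> k * ennreal (enn2real (h / k)) = h"
  by (metis divide_eq_1_ennreal ennreal_divide_eq_0_iff
    ennreal_divide_eq_top_iff ennreal_divide_times ennreal_enn2real_if
    infinity_ennreal_def mult_divide_eq_ennreal)

lemma leb1:
  assumes finM: "finite_measure M" and finP: "finite_measure P" and sets: "sets P = sets M"
  obtains f N where "f \<in> borel_measurable M" "\<forall>x. 0 \<le> f x" "N \<in> sets M" "emeasure M N = 0" "\<forall>x\<in>N. f x = 0"
    "\<forall>A\<in>sets M. emeasure P A = (\<integral>\<^sup>+x\<in>A. ennreal (f x) \<partial>M) + emeasure P (A \<inter> N)"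
proof -
  define K where "K = msum M P"
  have finK: "finite_measure K" unfolding K_def using sets finM finP by (rule finite_measure_msum)
  have sK: "sets K = sets M" unfolding K_def by simp
  have spK: "space K = space M" unfolding K_def by simp
  have spP: "space P = space M" using sets by (rule sets_eq_imp_space_eq)
  have eK: "emeasure K A = emeasure M A + emeasure P A" if "A \<in> sets M" for A
    unfolding K_def using sets that by (rule emeasure_msum)
  have acM: "absolutely_continuous K M"
    unfolding absolutely_continuous_def using eK by (auto simp: null_sets_def sK)
  have acP: "absolutely_continuous K P"
    unfolding absolutely_continuous_def using eK by (auto simp: null_sets_def sK sets)
  obtain k where k: "k \<in> borel_measurable K" "density K k = M"
    using finite_measure.Radon_Nikodym_finite_measure[OF finK finM _ acM] sK by auto
  obtain h where h: "h \<in> borel_measurable K" "density K h = P"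
    using finite_measure.Radon_Nikodym_finite_measure[OF finK finP _ acP] sK sets by auto
  define N where "N = {x\<in>space M. k x = 0}"
  have km: "k \<in> borel_measurable M" using k(1) measurable_cong_sets[OF sK refl] by blast
  have hm: "h \<in> borel_measurable M" using h(1) measurable_cong_sets[OF sK refl] by blast
  have Ns: "N \<in> sets M" unfolding N_def using km by measurable
  have MN: "emeasure M N = 0"
  proof -
    have "emeasure M N = emeasure (density K k) N" using k(2) by simp
    also have "\<dots> = \<integral>\<^sup>+x. k x * indicator N x \<partial>K" using k(1) Ns sK by (simp add: emeasure_density)
    also have "\<dots> = \<integral>\<^sup>+x. 0 \<partial>K" by (intro nn_integral_cong) (auto simp: N_def indicator_def spK)
    finally show ?thesis by simp
  qed
  have hfin: "AE x in K. h x \<noteq> \<infinity>"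
  proof (rule nn_integral_PInf_AE[OF h(1)])
    have "integral\<^sup>N K h = emeasure (density K h) (space K)" using h(1) by (simp add: emeasure_density)
    also have "\<dots> = emeasure P (space P)" using h(2) spK spP by simp
    finally show "integral\<^sup>N K h \<noteq> \<infinity>" using finite_measure.emeasure_finite[OF finP] by simp
  qed
  have kfin: "AE x in K. k x \<noteq> \<infinity>"
  proof (rule nn_integral_PInf_AE[OF k(1)])
    have "integral\<^sup>N K k = emeasure (density K k) (space K)" using k(1) by (simp add: emeasure_density)
    also have "\<dots> = emeasure M (space M)" using k(2) spK by simp
    finally show "integral\<^sup>N K k \<noteq> \<infinity>" using finite_measure.emeasure_finite[OF finM] by simp
  qed
  define f where "f x = (if k x = 0 then 0 else enn2real (h x / k x))" for x
  have fm: "f \<in> borel_measurable M" unfolding f_def using km hm by measurable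
  have f0: "\<forall>x. 0 \<le> f x" by (simp add: f_def)
  have fN: "\<forall>x\<in>N. f x = 0" by (simp add: f_def N_def)
  have main: "emeasure P A = (\<integral>\<^sup>+x\<in>A. ennreal (f x) \<partial>M) + emeasure P (A \<inter> N)" if A: "A \<in> sets M" for A
  proof -
    have AN: "A - N \<in> sets M" "A \<inter> N \<in> sets M" using A Ns by auto
    have "emeasure P A = emeasure P (A \<inter> N) + emeasure P (A - N)"
      using AN sets by (subst plus_emeasure) (auto intro!: arg_cong[where f="emeasure P"])
    moreover have "emeasure P (A - N) = \<integral>\<^sup>+x. h x * indicator (A - N) x \<partial>K"
      using h AN sK by (metis emeasure_density)
    moreover have "(\<integral>\<^sup>+x\<in>A. ennreal (f x) \<partial>M) = \<integral>\<^sup>+x. k x * (ennreal (f x) * indicator A x) \<partial>K"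
    proof -
      have "(\<integral>\<^sup>+x\<in>A. ennreal (f x) \<partial>M) = (\<integral>\<^sup>+x. ennreal (f x) * indicator A x \<partial>density K k)"
        using k(2) by simp
      also have "\<dots> = \<integral>\<^sup>+x. k x * (ennreal (f x) * indicator A x) \<partial>K"
        using k(1) fm A sK by (intro nn_integral_density) (auto simp: measurable_cong_sets[OF sK refl])
      finally show ?thesis .
    qed
    moreover have "(\<integral>\<^sup>+x. k x * (ennreal (f x) * indicator A x) \<partial>K) = \<integral>\<^sup>+x. h x * indicator (A - N) x \<partial>K"
    proof (rule nn_integral_cong_AE)
      show "AE x in K. k x * (ennreal (f x) * indicator A x) = h x * indicator (A - N) x"
        using hfin kfin
      proof eventually_elim
        case (elim x)
        show ?case
        proof (cases "x \<in> space M")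
          case False
          then have "x \<notin> A" using A sets.sets_into_space by auto
          then show ?thesis by simp
        next
          case True
          show ?thesis
          proof (cases "k x = 0")
            case True
            then show ?thesis using \<open>x \<in> space M\<close> by (simp add: N_def)
          next
            case False
            then have "x \<notin> N" by (simp add: N_def)
            then show ?thesis using False elim
              by (simp add: f_def indicator_def ennreal_aux_div mult.assoc[symmetric])
          qed
        qed
      qed
    qed
    ultimately show ?thesis by (simp add: add.commute)
  qed
  show ?thesis by (rule that[OF fm f0 Ns MN fN]) (use main in blast)
qed

lemma leb_unique_value:
  assumes finA: "finite_measure \<alpha>" and finB: "finite_measure \<beta>"
    and df: "leb_decomp \<beta> \<alpha> f s" and dg: "leb_decomp \<beta> \<alpha> g t"
  shows "(\<integral>\<^sup>+x. \<phi> (f x) \<partial>\<beta>) + c * emeasure s (space \<beta>) = (\<integral>\<^sup>+x. \<phi> (g x) \<partial>\<beta>) + c * emeasure t (space \<beta>)"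
proof -
  interpret B: finite_measure \<beta> by fact
  obtain N1 where N1: "N1 \<in> sets \<beta>" "emeasure \<beta> N1 = 0" "emeasure s (space \<beta> - N1) = 0"
    using df unfolding leb_decomp_def by blast
  obtain N2 where N2: "N2 \<in> sets \<beta>" "emeasure \<beta> N2 = 0" "emeasure t (space \<beta> - N2) = 0"
    using dg unfolding leb_decomp_def by blast
  have fm: "f \<in> borel_measurable \<beta>" and f0: "\<forall>x. 0 \<le> f x" and ss: "sets s = sets \<beta>"
    and fA: "\<forall>A\<in>sets \<beta>. emeasure \<alpha> A = (\<integral>\<^sup>+x\<in>A. ennreal (f x) \<partial>\<beta>) + emeasure s A"
    using df unfolding leb_decomp_def by blast+
  have gm: "g \<in> borel_measurable \<beta>" and g0: "\<forall>x. 0 \<le> g x" and st: "sets t = sets \<beta>"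
    and gA: "\<forall>A\<in>sets \<beta>. emeasure \<alpha> A = (\<integral>\<^sup>+x\<in>A. ennreal (g x) \<partial>\<beta>) + emeasure t A"
    using dg unfolding leb_decomp_def by blast+
  define Z where "Z = N1 \<union> N2"
  have Z: "Z \<in> sets \<beta>" "emeasure \<beta> Z = 0" unfolding Z_def using N1 N2
    by (auto simp: emeasure_Un_null_set null_sets_def)
  have AEZ: "AE x in \<beta>. x \<notin> Z" using Z by (intro AE_not_in) auto
  have eq: "(\<integral>\<^sup>+x\<in>A. ennreal (f x) \<partial>\<beta>) = (\<integral>\<^sup>+x\<in>A. ennreal (g x) \<partial>\<beta>)" if A: "A \<in> sets \<beta>" for A
  proof -
    have AZ: "A - Z \<in> sets \<beta>" using A Z by auto
    have s0: "emeasure s (A - Z) = 0"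
    proof -
      have "emeasure s (A - Z) \<le> emeasure s (space \<beta> - N1)"
        using AZ N1 ss sets.sets_into_space[OF A] by (intro emeasure_mono) (auto simp: Z_def)
      then show ?thesis using N1 by simp
    qed
    have t0: "emeasure t (A - Z) = 0"
    proof -
      have "emeasure t (A - Z) \<le> emeasure t (space \<beta> - N2)"
        using AZ N2 st sets.sets_into_space[OF A] by (intro emeasure_mono) (auto simp: Z_def)
      then show ?thesis using N2 by simp
    qed
    have cf: "(\<integral>\<^sup>+x\<in>A. ennreal (f x) \<partial>\<beta>) = (\<integral>\<^sup>+x\<in>A - Z. ennreal (f x) \<partial>\<beta>)"
      using AEZ by (intro nn_integral_cong_AE) (auto simp: indicator_def)
    have cg: "(\<integral>\<^sup>+x\<in>A. ennreal (g x) \<partial>\<beta>) = (\<integral>\<^sup>+x\<in>A - Z. ennreal (g x) \<partial>\<beta>)"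
      using AEZ by (intro nn_integral_cong_AE) (auto simp: indicator_def)
    show ?thesis using fA[rule_format, OF AZ] gA[rule_format, OF AZ] s0 t0 cf cg by simp
  qed
  have "AE x in \<beta>. ennreal (f x) = ennreal (g x)"
    using fm gm eq by (intro B.density_unique_finite_measure) auto
  then have AEfg: "AE x in \<beta>. f x = g x"
    by eventually_elim (use f0 g0 in auto)
  have i1: "(\<integral>\<^sup>+x. \<phi> (f x) \<partial>\<beta>) = (\<integral>\<^sup>+x. \<phi> (g x) \<partial>\<beta>)"
    using AEfg by (intro nn_integral_cong_AE) auto
  have sp: "space \<beta> \<in> sets \<beta>" by simp
  have i2: "(\<integral>\<^sup>+x\<in>space \<beta>. ennreal (f x) \<partial>\<beta>) = (\<integral>\<^sup>+x\<in>space \<beta>. ennreal (g x) \<partial>\<beta>)"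
    using eq[OF sp] .
  have fin: "(\<integral>\<^sup>+x\<in>space \<beta>. ennreal (f x) \<partial>\<beta>) \<noteq> \<infinity>"
  proof -
    have "(\<integral>\<^sup>+x\<in>space \<beta>. ennreal (f x) \<partial>\<beta>) \<le> emeasure \<alpha> (space \<beta>)"
      using fA[rule_format, OF sp] by simp
    also have "\<dots> < \<infinity>" using finite_measure.emeasure_finite[OF finA] by (simp add: less_top)
    finally show ?thesis by simp
  qed
  have "emeasure s (space \<beta>) = emeasure t (space \<beta>)"
    using fA[rule_format, OF sp] gA[rule_format, OF sp] i2 fin
    by (simp add: ennreal_add_left_cancel)
  then show ?thesis using i1 by simp
qed

lemma D_phi_eq:
  assumes finA: "finite_measure \<alpha>" and finB: "finite_measure \<beta>" and d: "leb_decomp \<beta> \<alpha> f s"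
  shows "D_phi \<phi> \<alpha> \<beta> = (\<integral>\<^sup>+x. \<phi> (f x) \<partial>\<beta>) + phi_inf \<phi> * emeasure s (space \<beta>)"
  unfolding D_phi_def
proof (rule someI2)
  show "\<exists>g t. leb_decomp \<beta> \<alpha> g t \<and> (\<integral>\<^sup>+x. \<phi> (f x) \<partial>\<beta>) + phi_inf \<phi> * emeasure s (space \<beta>) =
     (\<integral>\<^sup>+x. \<phi> (g x) \<partial>\<beta>) + phi_inf \<phi> * emeasure t (space \<beta>)" using d by blast
next
  fix v assume "\<exists>g t. leb_decomp \<beta> \<alpha> g t \<and> v = (\<integral>\<^sup>+x. \<phi> (g x) \<partial>\<beta>) + phi_inf \<phi> * emeasure t (space \<beta>)"
  then obtain g t where "leb_decomp \<beta> \<alpha> g t" "v = (\<integral>\<^sup>+x. \<phi> (g x) \<partial>\<beta>) + phi_inf \<phi> * emeasure t (space \<beta>)" by blast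
  then show "v = (\<integral>\<^sup>+x. \<phi> (f x) \<partial>\<beta>) + phi_inf \<phi> * emeasure s (space \<beta>)"
    using leb_unique_value[OF finA finB d] by metis
qed

lemma leb_tensor:
  assumes finM: "finite_measure M" and finP: "finite_measure P" and sets: "sets P = sets M"
    and fm: "f \<in> borel_measurable M" and f0: "\<forall>x. 0 \<le> f x" and Ns: "N \<in> sets M"
    and MN: "emeasure M N = 0" and fN: "\<forall>x\<in>N. f x = 0"
    and dec: "\<forall>A\<in>sets M. emeasure P A = (\<integral>\<^sup>+x\<in>A. ennreal (f x) \<partial>M) + emeasure P (A \<inter> N)"
  shows "leb_decomp (M \<Otimes>\<^sub>M M) (P \<Otimes>\<^sub>M P) (\<lambda>z. f (fst z) * f (snd z))
     (density (P \<Otimes>\<^sub>M P) (indicator (N \<times> space M \<union> space M \<times> N)))"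
proof -
  interpret M: finite_measure M by fact
  interpret P: finite_measure P by fact
  interpret MM: pair_sigma_finite M M by unfold_locales
  interpret PP: pair_sigma_finite P P by unfold_locales
  define W where "W = N \<times> space M \<union> space M \<times> N"
  have spP: "space P = space M" using sets by (rule sets_eq_imp_space_eq)
  have sPP: "sets (P \<Otimes>\<^sub>M P) = sets (M \<Otimes>\<^sub>M M)" using sets by (intro sets_pair_measure_cong) auto
  have spPP: "space (P \<Otimes>\<^sub>M P) = space (M \<Otimes>\<^sub>M M)" by (simp add: space_pair_measure spP)
  have Ws: "W \<in> sets (M \<Otimes>\<^sub>M M)" unfolding W_def using Ns by auto
  have WsP: "W \<in> sets (P \<Otimes>\<^sub>M P)" using Ws sPP by simp
  have iW: "indicator W \<in> borel_measurable (P \<Otimes>\<^sub>M P)" using WsP by (rule borel_measurable_indicator)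
  have fmP: "f \<in> borel_measurable P" using fm measurable_cong_sets[OF sets refl] by blast
  have Fm: "(\<lambda>z. f (fst z) * f (snd z)) \<in> borel_measurable (M \<Otimes>\<^sub>M M)" using fm by measurable
  have MMW: "emeasure (M \<Otimes>\<^sub>M M) W = 0"
  proof -
    have "emeasure (M \<Otimes>\<^sub>M M) W \<le> emeasure (M \<Otimes>\<^sub>M M) (N \<times> space M) + emeasure (M \<Otimes>\<^sub>M M) (space M \<times> N)"
      unfolding W_def using Ns by (intro emeasure_subadditive) auto
    also have "\<dots> = 0" using Ns MN by (simp add: M.emeasure_pair_measure_Times)
    finally show ?thesis by simp
  qed
  have Sout: "emeasure (density (P \<Otimes>\<^sub>M P) (indicator W)) (space (M \<Otimes>\<^sub>M M) - W) = 0"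
  proof -
    have "emeasure (density (P \<Otimes>\<^sub>M P) (indicator W)) (space (M \<Otimes>\<^sub>M M) - W)
      = \<integral>\<^sup>+z. indicator W z * indicator (space (M \<Otimes>\<^sub>M M) - W) z \<partial>(P \<Otimes>\<^sub>M P)"
      using WsP Ws sPP iW by (subst emeasure_density) auto
    also have "\<dots> = \<integral>\<^sup>+z. 0 \<partial>(P \<Otimes>\<^sub>M P)" by (intro nn_integral_cong) (auto simp: indicator_def)
    finally show ?thesis by simp
  qed
  define N' where "N' = space M - N"
  have N's: "N' \<in> sets M" unfolding N'_def using Ns by auto
  have N'sP: "N' \<in> sets P" using N's sets by simp
  have dP: "density P (indicator N') = density M (\<lambda>x. ennreal (f x))"
  proof (rule measure_eqI)
    show "sets (density P (indicator N')) = sets (density M (\<lambda>x. ennreal (f x)))" using sets by simp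
    fix B assume "B \<in> sets (density P (indicator N'))"
    then have B: "B \<in> sets M" using sets by simp
    have BN: "B - N \<in> sets M" using B Ns by auto
    have "emeasure (density P (indicator N')) B = \<integral>\<^sup>+x. indicator N' x * indicator B x \<partial>P"
      using B sets N'sP by (subst emeasure_density) auto
    also have "\<dots> = \<integral>\<^sup>+x. indicator (B - N) x \<partial>P"
      using sets.sets_into_space[OF B] by (intro nn_integral_cong) (auto simp: indicator_def N'_def spP)
    also have "\<dots> = emeasure P (B - N)"
      using BN sets by simp
    also have "\<dots> = (\<integral>\<^sup>+x\<in>B - N. ennreal (f x) \<partial>M)"
    proof -
      have "(B - N) \<inter> N = {}" by auto
      then show ?thesis using dec BN by simp
    qed
    also have "\<dots> = (\<integral>\<^sup>+x\<in>B. ennreal (f x) \<partial>M)"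
      using fN by (intro nn_integral_cong) (auto simp: indicator_def)
    also have "\<dots> = emeasure (density M (\<lambda>x. ennreal (f x))) B" using B fm by (simp add: emeasure_density)
    finally show "emeasure (density P (indicator N')) B = emeasure (density M (\<lambda>x. ennreal (f x))) B" .
  qed
  have fin_dM: "finite_measure (density M (\<lambda>x. ennreal (f x)))"
  proof -
    have "finite_measure (density P (indicator N'))"
    proof (rule finite_measureI)
      have "emeasure (density P (indicator N')) (space (density P (indicator N'))) = \<integral>\<^sup>+x. indicator N' x * indicator (space P) x \<partial>P"
        using N'sP by (subst emeasure_density) auto
      also have "\<dots> \<le> \<integral>\<^sup>+x. indicator (space P) x \<partial>P"
        by (intro nn_integral_mono) (auto simp: indicator_def)
      also have "\<dots> = emeasure P (space P)" by simp
      finally have "emeasure (density P (indicator N')) (space (density P (indicator N'))) \<le> emeasure P (space P)" .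
      then show "emeasure (density P (indicator N')) (space (density P (indicator N'))) \<noteq> \<infinity>"
        using P.emeasure_finite by (auto simp: top_unique)
    qed
    then show ?thesis using dP by simp
  qed
  have sfd: "sigma_finite_measure (density M (\<lambda>x. ennreal (f x)))"
  proof -
    interpret D: finite_measure "density M (\<lambda>x. ennreal (f x))" by (rule fin_dM)
    show ?thesis by (rule D.sigma_finite_measure_axioms)
  qed
  have Q1: "density P (indicator N') \<Otimes>\<^sub>M density P (indicator N') = density (P \<Otimes>\<^sub>M P) (\<lambda>(x,y). indicator N' x * indicator N' y)"
    using N'sP sfd dP by (intro pair_measure_density) (auto intro: P.sigma_finite_measure_axioms)
  have Q2: "density M (\<lambda>x. ennreal (f x)) \<Otimes>\<^sub>M density M (\<lambda>x. ennreal (f x)) = density (M \<Otimes>\<^sub>M M) (\<lambda>(x,y). ennreal (f x) * ennreal (f y))"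
    using fm sfd by (intro pair_measure_density) (auto intro: M.sigma_finite_measure_axioms)
  have main: "emeasure (P \<Otimes>\<^sub>M P) A = (\<integral>\<^sup>+x\<in>A. ennreal (f (fst x) * f (snd x)) \<partial>(M \<Otimes>\<^sub>M M)) +
      emeasure (density (P \<Otimes>\<^sub>M P) (indicator W)) A" if A: "A \<in> sets (M \<Otimes>\<^sub>M M)" for A
  proof -
    have AP: "A \<in> sets (P \<Otimes>\<^sub>M P)" using A sPP by simp
    have "emeasure (P \<Otimes>\<^sub>M P) A = emeasure (P \<Otimes>\<^sub>M P) (A - W) + emeasure (P \<Otimes>\<^sub>M P) (A \<inter> W)"
      using AP WsP by (subst plus_emeasure) (auto intro!: arg_cong[where f="emeasure (P \<Otimes>\<^sub>M P)"])
    moreover have "emeasure (density (P \<Otimes>\<^sub>M P) (indicator W)) A = emeasure (P \<Otimes>\<^sub>M P) (A \<inter> W)"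
    proof -
      have "emeasure (density (P \<Otimes>\<^sub>M P) (indicator W)) A = \<integral>\<^sup>+x. indicator W x * indicator A x \<partial>(P \<Otimes>\<^sub>M P)"
        by (rule emeasure_density[OF iW AP])
      also have "\<dots> = \<integral>\<^sup>+x. indicator (A \<inter> W) x \<partial>(P \<Otimes>\<^sub>M P)"
        by (intro nn_integral_cong) (auto simp: indicator_def)
      also have "\<dots> = emeasure (P \<Otimes>\<^sub>M P) (A \<inter> W)" using AP WsP by simp
      finally show ?thesis .
    qed
    moreover have "emeasure (P \<Otimes>\<^sub>M P) (A - W) = (\<integral>\<^sup>+x\<in>A. ennreal (f (fst x) * f (snd x)) \<partial>(M \<Otimes>\<^sub>M M))"
    proof -
      have iN: "(\<lambda>(x,y). indicator N' x * indicator N' y :: ennreal) \<in> borel_measurable (P \<Otimes>\<^sub>M P)"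
        using N'sP by measurable
      have "emeasure (density (P \<Otimes>\<^sub>M P) (\<lambda>(x,y). indicator N' x * indicator N' y)) A
         = \<integral>\<^sup>+z. (\<lambda>(x,y). indicator N' x * indicator N' y) z * indicator A z \<partial>(P \<Otimes>\<^sub>M P)"
        by (rule emeasure_density[OF iN AP])
      also have "\<dots> = \<integral>\<^sup>+z. indicator (A - W) z \<partial>(P \<Otimes>\<^sub>M P)"
        using sets.sets_into_space[OF AP]
        by (intro nn_integral_cong) (auto simp: indicator_def W_def N'_def space_pair_measure spP)
      also have "\<dots> = emeasure (P \<Otimes>\<^sub>M P) (A - W)" using AP WsP by simp
      finally have "emeasure (P \<Otimes>\<^sub>M P) (A - W) = emeasure (density (P \<Otimes>\<^sub>M P) (\<lambda>(x,y). indicator N' x * indicator N' y)) A" by simp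
      also have "\<dots> = emeasure (density (M \<Otimes>\<^sub>M M) (\<lambda>(x,y). ennreal (f x) * ennreal (f y))) A"
        using Q1 Q2 dP by simp
      also have "\<dots> = (\<integral>\<^sup>+x\<in>A. ennreal (f (fst x) * f (snd x)) \<partial>(M \<Otimes>\<^sub>M M))"
        using A fm f0 by (subst emeasure_density) (auto intro!: nn_integral_cong simp: ennreal_mult)
      finally show ?thesis .
    qed
    ultimately show ?thesis by (simp add: add.commute)
  qed
  show ?thesis unfolding leb_decomp_def W_def[symmetric]
    using Fm f0 sPP Ws MMW Sout main by auto
qed

lemma phi0_meas:
  assumes "lsc_on_nonneg \<phi>"
  shows "(\<lambda>x. \<phi> (max 0 x)) \<in> borel_measurable borel"
proof (rule borel_measurableI_greater)
  fix y :: ennreal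
  have "closed {x. \<phi> (max 0 x) \<le> y}"
    unfolding closed_sequential_limits
  proof (intro allI impI, elim conjE)
    fix X :: "nat \<Rightarrow> real" and l assume X: "\<forall>n. X n \<in> {x. \<phi> (max 0 x) \<le> y}" "X \<longlonglongrightarrow> l"
    have t: "(\<lambda>n. max 0 (X n)) \<longlonglongrightarrow> max 0 l" using X(2) by (intro tendsto_intros)
    have "\<phi> (max 0 l) \<le> liminf (\<lambda>n. \<phi> (max 0 (X n)))"
      using assms t unfolding lsc_on_nonneg_def by auto
    also have "\<dots> \<le> limsup (\<lambda>n. \<phi> (max 0 (X n)))" by (rule Liminf_le_Limsup) simp
    also have "\<dots> \<le> y" using X(1) by (intro Limsup_bounded) auto
    finally show "l \<in> {x. \<phi> (max 0 x) \<le> y}" by simp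
  qed
  then have "open {x. y < \<phi> (max 0 x)}"
    by (metis (no_types, lifting) Collect_cong Collect_neg_eq not_le open_Compl closed_def)
  then show "{x \<in> space borel. y < \<phi> (max 0 x)} \<in> sets borel" by simp
qed

lemma AE_msum:
  assumes "sets B = sets A" "AE x in A. Q x" "AE x in B. Q x"
  shows "AE x in msum A B. Q x"
proof -
  obtain N1 where N1: "{x\<in>space A. \<not> Q x} \<subseteq> N1" "N1 \<in> null_sets A" using assms(2) by (auto simp: eventually_ae_filter)
  obtain N2 where N2: "{x\<in>space B. \<not> Q x} \<subseteq> N2" "N2 \<in> null_sets B" using assms(3) by (auto simp: eventually_ae_filter)
  have sp: "space B = space A" using assms(1) by (rule sets_eq_imp_space_eq)
  have "N1 \<inter> N2 \<in> null_sets (msum A B)"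
  proof -
    have s: "N1 \<inter> N2 \<in> sets A" using null_setsD2[OF N1(2)] null_setsD2[OF N2(2)] assms(1) by auto
    have "N1 \<inter> N2 \<in> null_sets A" by (rule null_sets_subset[OF N1(2)]) (use s in auto)
    then have "emeasure A (N1 \<inter> N2) = 0" by auto
    moreover have "N1 \<inter> N2 \<in> null_sets B" by (rule null_sets_subset[OF N2(2)]) (use s assms(1) in auto)
    then have "emeasure B (N1 \<inter> N2) = 0" by auto
    ultimately show ?thesis using s assms(1) by (simp add: null_sets_def emeasure_msum)
  qed
  moreover have "{x\<in>space (msum A B). \<not> Q x} \<subseteq> N1 \<inter> N2" using N1(1) N2(1) sp by auto
  ultimately show ?thesis unfolding eventually_ae_filter by blast
qed

lemma integrable_msum:
  fixes f :: "'a \<Rightarrow> real"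
  assumes "sets B = sets A"
  shows "integrable (msum A B) f \<longleftrightarrow> integrable A f \<and> integrable B f"
proof -
  have mB: "f \<in> borel_measurable B \<longleftrightarrow> f \<in> borel_measurable A" unfolding measurable_cong_sets[OF assms refl, of borel] ..
  show ?thesis
  proof (cases "f \<in> borel_measurable A")
    case True
    then have nm: "(\<lambda>x. ennreal (norm (f x))) \<in> borel_measurable A" by measurable
    have "integrable (msum A B) f \<longleftrightarrow> (\<integral>\<^sup>+x. ennreal (norm (f x)) \<partial>msum A B) < \<infinity>"
      using True by (simp add: integrable_iff_bounded)
    also have "\<dots> \<longleftrightarrow> (\<integral>\<^sup>+x. ennreal (norm (f x)) \<partial>A) + (\<integral>\<^sup>+x. ennreal (norm (f x)) \<partial>B) < \<infinity>"
      by (simp only: nn_integral_msum[OF assms nm])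
    also have "\<dots> \<longleftrightarrow> integrable A f \<and> integrable B f"
      using True mB by (simp add: integrable_iff_bounded)
    finally show ?thesis .
  next
    case False
    then show ?thesis using mB unfolding integrable_iff_bounded by simp
  qed
qed
lemma integral_msum:
  fixes f :: "'a \<Rightarrow> real"
  assumes sets: "sets B = sets A" and iA: "integrable A f" and iB: "integrable B f"
  shows "integral\<^sup>L (msum A B) f = integral\<^sup>L A f + integral\<^sup>L B f"
proof -
  have iM: "integrable (msum A B) f" using integrable_msum[OF sets] iA iB by simp
  have fm: "f \<in> borel_measurable A" using iA by auto
  have m1: "(\<lambda>x. ennreal (f x)) \<in> borel_measurable A" and m2: "(\<lambda>x. ennreal (- f x)) \<in> borel_measurable A"
    using fm by measurable
  have fin: "(\<integral>\<^sup>+x. ennreal (f x) \<partial>M) < top" "(\<integral>\<^sup>+x. ennreal (- f x) \<partial>M) < top" if "integrable M f" for M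
  proof -
    have "(\<integral>\<^sup>+x. ennreal (f x) \<partial>M) \<le> (\<integral>\<^sup>+x. ennreal (norm (f x)) \<partial>M)" by (intro nn_integral_mono) auto
    also have "\<dots> < top" using that by (simp add: integrable_iff_bounded)
    finally show "(\<integral>\<^sup>+x. ennreal (f x) \<partial>M) < top" .
    have "(\<integral>\<^sup>+x. ennreal (- f x) \<partial>M) \<le> (\<integral>\<^sup>+x. ennreal (norm (f x)) \<partial>M)" by (intro nn_integral_mono) auto
    also have "\<dots> < top" using that by (simp add: integrable_iff_bounded)
    finally show "(\<integral>\<^sup>+x. ennreal (- f x) \<partial>M) < top" .
  qed
  show ?thesis
    using fin[OF iA] fin[OF iB]
    by (simp add: real_lebesgue_integral_def[OF iM] real_lebesgue_integral_def[OF iA] real_lebesgue_integral_def[OF iB]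
        nn_integral_msum[OF sets m1] nn_integral_msum[OF sets m2] enn2real_plus)
qed

lemma nn_integral_prod_fun:
  assumes "finite_measure M" "finite_measure N" "u \<in> borel_measurable M" "v \<in> borel_measurable N"
  shows "(\<integral>\<^sup>+z. u (fst z) * v (snd z) \<partial>(M \<Otimes>\<^sub>M N)) = integral\<^sup>N M u * integral\<^sup>N N v"
proof -
  interpret N: finite_measure N by fact
  have "(\<integral>\<^sup>+z. u (fst z) * v (snd z) \<partial>(M \<Otimes>\<^sub>M N)) = \<integral>\<^sup>+x. \<integral>\<^sup>+y. u x * v y \<partial>N \<partial>M"
    using assms by (subst N.nn_integral_fst[symmetric]) (auto simp: case_prod_beta)
  also have "\<dots> = \<integral>\<^sup>+x. u x * integral\<^sup>N N v \<partial>M"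
    using assms by (simp add: nn_integral_cmult)
  also have "\<dots> = integral\<^sup>N M u * integral\<^sup>N N v"
    using assms by (simp add: nn_integral_multc)
  finally show ?thesis .
qed

locale side =
  fixes \<phi> :: "real \<Rightarrow> ennreal" and p :: real and \<mu> :: "'a::polish_space measure" and P :: "'a measure"
    and f :: "'a \<Rightarrow> real" and N :: "'a set"
  assumes p: "0 < p" and lsc: "lsc_on_nonneg \<phi>"
    and s\<mu>: "sets \<mu> = sets borel" and fin\<mu>: "finite_measure \<mu>"
    and sP: "sets P = sets borel" and finP: "finite_measure P"
    and fm: "f \<in> borel_measurable borel" and f0: "\<forall>x. 0 \<le> f x" and Ns: "N \<in> sets borel"
    and \<mu>N: "emeasure \<mu> N = 0" and fN: "\<forall>x\<in>N. f x = 0"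
    and dec: "\<forall>A\<in>sets borel. emeasure P A = (\<integral>\<^sup>+x\<in>A. ennreal (f x) \<partial>\<mu>) + emeasure P (A \<inter> N)"
begin

definition G where "G = {x. 0 < f x}"
definition \<rho> where "\<rho> x = (if 0 < f x then f x powr (-1/p) else 0)"

lemma sp\<mu>[simp]: "space \<mu> = UNIV" using sets_eq_imp_space_eq[OF s\<mu>] by simp
lemma spP[simp]: "space P = UNIV" using sets_eq_imp_space_eq[OF sP] by simp
lemma meas\<mu>[simp]: "measurable \<mu> N' = measurable borel N'" by (rule measurable_cong_sets) (simp_all add: s\<mu>)
lemma measP[simp]: "measurable P N' = measurable borel N'" by (rule measurable_cong_sets) (simp_all add: sP)
lemmas [measurable] = fm Ns
lemma Gs[measurable]: "G \<in> sets borel" unfolding G_def using fm by measurable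
lemma \<rho>m[measurable]: "\<rho> \<in> borel_measurable borel" unfolding \<rho>_def using fm by measurable
lemma \<rho>0: "0 \<le> \<rho> x" by (simp add: \<rho>_def)
lemma \<rho>p: "\<rho> x powr p = (if x \<in> G then 1 / f x else 0)"
proof (cases "0 < f x")
  case True
  have "(f x powr (-1/p)) powr p = f x powr (-1/p * p)" by (simp add: powr_powr)
  also have "-1/p * p = -1" using p by simp
  finally show ?thesis using True by (simp add: \<rho>_def G_def powr_minus_divide)
qed (simp add: \<rho>_def G_def)
lemma f\<rho>p: "f x * \<rho> x powr p = indicator G x"
  using f0[rule_format, of x] by (auto simp: \<rho>p G_def indicator_def)
lemma \<rho>N: "x \<in> N \<Longrightarrow> \<rho> x = 0" using fN by (simp add: \<rho>_def)
lemma NG: "x \<in> N \<Longrightarrow> x \<notin> G" using fN by (simp add: G_def)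

lemma P_msum: "P = msum (density \<mu> (\<lambda>x. ennreal (f x))) (density P (\<lambda>x. ennreal (indicator N x)))"
proof (rule measure_eqI)
  show "sets P = sets (msum (density \<mu> (\<lambda>x. ennreal (f x))) (density P (\<lambda>x. ennreal (indicator N x))))"
    by (simp add: sP s\<mu>)
  fix A assume "A \<in> sets P"
  then have A: "A \<in> sets borel" using sP by simp
  have "emeasure (msum (density \<mu> (\<lambda>x. ennreal (f x))) (density P (\<lambda>x. ennreal (indicator N x)))) A
     = (\<integral>\<^sup>+x\<in>A. ennreal (f x) \<partial>\<mu>) + (\<integral>\<^sup>+x. ennreal (indicator N x) * indicator A x \<partial>P)"
  proof -
    have m1: "(\<lambda>x. ennreal (f x)) \<in> borel_measurable \<mu>" by simp
    have m2: "(\<lambda>x. ennreal (indicator N x)) \<in> borel_measurable P" by simp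
    show ?thesis using A by (simp add: emeasure_msum sP s\<mu> emeasure_density[OF m1] emeasure_density[OF m2])
  qed
  also have "(\<integral>\<^sup>+x. ennreal (indicator N x) * indicator A x \<partial>P) = (\<integral>\<^sup>+x. indicator (A \<inter> N) x \<partial>P)"
    by (intro nn_integral_cong) (auto simp: indicator_def)
  also have "\<dots> = emeasure P (A \<inter> N)"
  proof (rule nn_integral_indicator)
    show "A \<inter> N \<in> sets P" unfolding sP using A Ns by (rule sets.Int)
  qed
  finally show "emeasure P A = emeasure (msum (density \<mu> (\<lambda>x. ennreal (f x))) (density P (\<lambda>x. ennreal (indicator N x)))) A"
    using dec[rule_format, OF A] by simp
qed

lemma nn_P:
  assumes u: "u \<in> borel_measurable borel"
  shows "integral\<^sup>N P u = (\<integral>\<^sup>+x. ennreal (f x) * u x \<partial>\<mu>) + (\<integral>\<^sup>+x. ennreal (indicator N x) * u x \<partial>P)"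
proof -
  have "integral\<^sup>N P u = integral\<^sup>N (msum (density \<mu> (\<lambda>x. ennreal (f x))) (density P (\<lambda>x. ennreal (indicator N x)))) u"
    by (subst P_msum) (rule refl)
  also have "\<dots> = integral\<^sup>N (density \<mu> (\<lambda>x. ennreal (f x))) u + integral\<^sup>N (density P (\<lambda>x. ennreal (indicator N x))) u"
    using u by (intro nn_integral_msum) (auto simp: sP s\<mu>)
  also have "\<dots> = (\<integral>\<^sup>+x. ennreal (f x) * u x \<partial>\<mu>) + (\<integral>\<^sup>+x. ennreal (indicator N x) * u x \<partial>P)"
    using u fm by (simp add: nn_integral_density)
  finally show ?thesis .
qed

lemma S1: "(\<integral>\<^sup>+x. ennreal (\<rho> x powr p) \<partial>P) = emeasure \<mu> G"
proof -
  have "(\<integral>\<^sup>+x. ennreal (\<rho> x powr p) \<partial>P) = (\<integral>\<^sup>+x. ennreal (f x) * ennreal (\<rho> x powr p) \<partial>\<mu>) + (\<integral>\<^sup>+x. ennreal (indicator N x) * ennreal (\<rho> x powr p) \<partial>P)"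
    by (rule nn_P) measurable
  also have "(\<integral>\<^sup>+x. ennreal (f x) * ennreal (\<rho> x powr p) \<partial>\<mu>) = (\<integral>\<^sup>+x. indicator G x \<partial>\<mu>)"
    using f0 by (intro nn_integral_cong) (simp add: ennreal_mult''[symmetric] f\<rho>p ennreal_indicator)
  also have "(\<integral>\<^sup>+x. ennreal (indicator N x) * ennreal (\<rho> x powr p) \<partial>P) = (\<integral>\<^sup>+x. 0 \<partial>P)"
    by (intro nn_integral_cong) (auto simp: indicator_def \<rho>N)
  finally show ?thesis using Gs s\<mu> by simp
qed

lemma S2:
  fixes \<xi> :: "'a \<Rightarrow> real"
  assumes \<xi>m: "\<xi> \<in> borel_measurable borel" and \<xi>b: "\<And>x. \<bar>\<xi> x\<bar> \<le> K"
  shows "integrable P (\<lambda>x. \<xi> x * \<rho> x powr p)"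
    and "(\<integral>x. \<xi> x * \<rho> x powr p \<partial>P) = (\<integral>x. indicator G x * \<xi> x \<partial>\<mu>)"
proof -
  let ?D1 = "density \<mu> (\<lambda>x. ennreal (f x))"
  let ?D2 = "density P (\<lambda>x. ennreal (indicator N x))"
  have sD: "sets ?D2 = sets ?D1" by (simp add: sP s\<mu>)
  have vm: "(\<lambda>x. \<xi> x * \<rho> x powr p) \<in> borel_measurable borel" using \<xi>m by measurable
  have e1: "(\<lambda>x. f x * (\<xi> x * \<rho> x powr p)) = (\<lambda>x. indicator G x * \<xi> x)"
    by (rule ext) (simp add: f\<rho>p[symmetric] ac_simps)
  have e2: "(\<lambda>x. indicator N x * (\<xi> x * \<rho> x powr p)) = (\<lambda>x. 0)"
    by (rule ext) (auto simp: indicator_def \<rho>N)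
  have iG: "integrable \<mu> (\<lambda>x. indicator G x * \<xi> x)"
  proof (rule finite_measure.integrable_const_bound[OF fin\<mu>, where B=K])
    show "AE x in \<mu>. norm (indicator G x * \<xi> x) \<le> K" using \<xi>b
      by (auto simp: indicator_def intro: order_trans[OF _ \<xi>b])
    show "(\<lambda>x. indicator G x * \<xi> x) \<in> borel_measurable \<mu>" using \<xi>m by simp
  qed
  have i1: "integrable ?D1 (\<lambda>x. \<xi> x * \<rho> x powr p)"
    using vm fm f0 iG by (subst integrable_density) (auto simp: e1)
  have i2: "integrable ?D2 (\<lambda>x. \<xi> x * \<rho> x powr p)"
    using vm by (subst integrable_density) (auto simp: e2)
  show iP: "integrable P (\<lambda>x. \<xi> x * \<rho> x powr p)"
    by (subst P_msum, subst integrable_msum[OF sD]) (use i1 i2 in simp)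
  have "(\<integral>x. \<xi> x * \<rho> x powr p \<partial>P) = (\<integral>x. \<xi> x * \<rho> x powr p \<partial>?D1) + (\<integral>x. \<xi> x * \<rho> x powr p \<partial>?D2)"
    by (subst P_msum, rule integral_msum[OF sD i1 i2])
  also have "(\<integral>x. \<xi> x * \<rho> x powr p \<partial>?D1) = (\<integral>x. indicator G x * \<xi> x \<partial>\<mu>)"
    using vm fm f0 by (subst integral_density) (auto simp: e1)
  also have "(\<integral>x. \<xi> x * \<rho> x powr p \<partial>?D2) = 0"
    using vm by (subst integral_density) (auto simp: e2)
  finally show "(\<integral>x. \<xi> x * \<rho> x powr p \<partial>P) = (\<integral>x. indicator G x * \<xi> x \<partial>\<mu>)" by simp
qed

lemma measMM: "measurable (\<mu> \<Otimes>\<^sub>M \<mu>) N' = measurable (borel \<Otimes>\<^sub>M borel) N'"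
  by (rule measurable_cong_sets) (auto intro!: sets_pair_measure_cong simp: s\<mu>)
lemma measPP: "measurable (P \<Otimes>\<^sub>M P) N' = measurable (borel \<Otimes>\<^sub>M borel) N'"
  by (rule measurable_cong_sets) (auto intro!: sets_pair_measure_cong simp: sP)

lemma psi_alt: "psi \<phi> = (\<lambda>u. if u = 0 then phi_inf \<phi> else ennreal u * \<phi> (max 0 (1/u)))"
proof (rule ext)
  fix u :: real show "psi \<phi> u = (if u = 0 then phi_inf \<phi> else ennreal u * \<phi> (max 0 (1/u)))"
    by (cases "u < 0") (auto simp: psi_def ennreal_neg max_def)
qed

lemma psi_meas[measurable]: "psi \<phi> \<in> borel_measurable borel"
proof -
  have m: "(\<lambda>x. \<phi> (max 0 x)) \<in> borel_measurable borel" using lsc by (rule phi0_meas)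
  have "(\<lambda>u. if u = 0 then phi_inf \<phi> else ennreal u * \<phi> (max 0 (1/u))) \<in> borel_measurable borel"
    using m by measurable
  then show ?thesis by (simp add: psi_alt)
qed

lemma phi0_meas'[measurable]: "(\<lambda>x. \<phi> (max 0 x)) \<in> borel_measurable borel" using lsc by (rule phi0_meas)

lemma S3:
  "(\<integral>\<^sup>+z. psi \<phi> ((\<rho> (fst z) * \<rho> (snd z)) powr p) \<partial>(P \<Otimes>\<^sub>M P))
    + \<phi> 0 * (emeasure \<mu> G * emeasure \<mu> (- G) + emeasure \<mu> (- G) * emeasure \<mu> G + emeasure \<mu> (- G) * emeasure \<mu> (- G))
   \<le> D_phi \<phi> (P \<Otimes>\<^sub>M P) (\<mu> \<Otimes>\<^sub>M \<mu>)"
proof -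
  interpret M: finite_measure \<mu> by (rule fin\<mu>)
  interpret PF: finite_measure P by (rule finP)
  interpret MM: pair_sigma_finite \<mu> \<mu> by unfold_locales
  interpret PP: pair_sigma_finite P P by unfold_locales
  define W where "W = N \<times> space \<mu> \<union> space \<mu> \<times> N"
  define F where "F z = f (fst z) * f (snd z)" for z
  define S where "S = density (P \<Otimes>\<^sub>M P) (indicator W)"
  have sets: "sets P = sets \<mu>" by (simp only: sP s\<mu>)
  have ld: "leb_decomp (\<mu> \<Otimes>\<^sub>M \<mu>) (P \<Otimes>\<^sub>M P) F S"
    unfolding F_def S_def W_def
  proof (rule leb_tensor[OF fin\<mu> finP sets _ f0 _ \<mu>N fN])
    show "f \<in> borel_measurable \<mu>" by simp
    show "N \<in> sets \<mu>" using Ns by (simp only: s\<mu>)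
    show "\<forall>A\<in>sets \<mu>. emeasure P A = (\<integral>\<^sup>+x\<in>A. ennreal (f x) \<partial>\<mu>) + emeasure P (A \<inter> N)"
      using dec by (simp only: s\<mu>)
  qed
  have finPP: "finite_measure (P \<Otimes>\<^sub>M P)" by (intro finite_measure_pair_measure finP)
  have finMM: "finite_measure (\<mu> \<Otimes>\<^sub>M \<mu>)" by (intro finite_measure_pair_measure fin\<mu>)
  have D: "D_phi \<phi> (P \<Otimes>\<^sub>M P) (\<mu> \<Otimes>\<^sub>M \<mu>) = (\<integral>\<^sup>+z. \<phi> (F z) \<partial>(\<mu> \<Otimes>\<^sub>M \<mu>)) + phi_inf \<phi> * emeasure S (space (\<mu> \<Otimes>\<^sub>M \<mu>))"
    by (rule D_phi_eq[OF finPP finMM ld])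
  have Ws: "W \<in> sets (P \<Otimes>\<^sub>M P)" unfolding W_def using Ns by (auto simp: sP)
  have iW: "indicator W \<in> borel_measurable (P \<Otimes>\<^sub>M P)" using Ws by (rule borel_measurable_indicator)
  have spMM: "space (\<mu> \<Otimes>\<^sub>M \<mu>) = UNIV" by (simp add: space_pair_measure)
  have spPP: "space (P \<Otimes>\<^sub>M P) = UNIV" by (simp add: space_pair_measure)
  have sPPMM: "sets (P \<Otimes>\<^sub>M P) = sets (\<mu> \<Otimes>\<^sub>M \<mu>)" using sets by (intro sets_pair_measure_cong) auto
  have SW: "emeasure S (space (\<mu> \<Otimes>\<^sub>M \<mu>)) = emeasure (P \<Otimes>\<^sub>M P) W"
  proof -
    have "emeasure S (space (\<mu> \<Otimes>\<^sub>M \<mu>)) = \<integral>\<^sup>+z. indicator W z * indicator UNIV z \<partial>(P \<Otimes>\<^sub>M P)"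
      unfolding S_def spMM using iW by (rule emeasure_density) (simp add: spPP[symmetric])
    also have "\<dots> = emeasure (P \<Otimes>\<^sub>M P) W" using Ws by simp
    finally show ?thesis .
  qed
  have Fm: "F \<in> borel_measurable (\<mu> \<Otimes>\<^sub>M \<mu>)" unfolding F_def measMM by measurable
  have F0: "0 \<le> F z" for z using f0 unfolding F_def by (simp add: zero_le_mult_iff)
  have PPm: "P \<Otimes>\<^sub>M P = msum (density (\<mu> \<Otimes>\<^sub>M \<mu>) (\<lambda>z. ennreal (F z))) S"
  proof (rule measure_eqI)
    show "sets (P \<Otimes>\<^sub>M P) = sets (msum (density (\<mu> \<Otimes>\<^sub>M \<mu>) (\<lambda>z. ennreal (F z))) S)"
      using sPPMM by simp
    fix A assume "A \<in> sets (P \<Otimes>\<^sub>M P)"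
    then have A: "A \<in> sets (\<mu> \<Otimes>\<^sub>M \<mu>)" using sPPMM by simp
    have sS: "sets S = sets (\<mu> \<Otimes>\<^sub>M \<mu>)" unfolding S_def using sPPMM by simp
    have "emeasure (msum (density (\<mu> \<Otimes>\<^sub>M \<mu>) (\<lambda>z. ennreal (F z))) S) A
      = emeasure (density (\<mu> \<Otimes>\<^sub>M \<mu>) (\<lambda>z. ennreal (F z))) A + emeasure S A"
      using A sS by (intro emeasure_msum) auto
    also have "\<dots> = (\<integral>\<^sup>+z\<in>A. ennreal (F z) \<partial>(\<mu> \<Otimes>\<^sub>M \<mu>)) + emeasure S A"
      using A Fm by (simp add: emeasure_density)
    also have "\<dots> = emeasure (P \<Otimes>\<^sub>M P) A" using ld A unfolding leb_decomp_def by simp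
    finally show "emeasure (P \<Otimes>\<^sub>M P) A = emeasure (msum (density (\<mu> \<Otimes>\<^sub>M \<mu>) (\<lambda>z. ennreal (F z))) S) A" by simp
  qed
  define \<psi>z where "\<psi>z z = psi \<phi> ((\<rho> (fst z) * \<rho> (snd z)) powr p)" for z
  have \<psi>m: "\<psi>z \<in> borel_measurable (P \<Otimes>\<^sub>M P)" unfolding \<psi>z_def measPP by measurable
  have \<psi>m': "\<psi>z \<in> borel_measurable (\<mu> \<Otimes>\<^sub>M \<mu>)" unfolding \<psi>z_def measMM by measurable
  define GG where "GG = G \<times> G"
  have GGs: "GG \<in> sets (\<mu> \<Otimes>\<^sub>M \<mu>)" unfolding GG_def by (simp add: s\<mu>)
  have cGGs: "- GG \<in> sets (\<mu> \<Otimes>\<^sub>M \<mu>)" using sets.compl_sets[OF GGs] by (simp add: spMM Compl_eq_Diff_UNIV)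
  have phiF: "\<phi> (F z) = \<phi> (max 0 (F z))" for z using F0[of z] by simp
  have \<phi>Fm: "(\<lambda>z. \<phi> (F z)) \<in> borel_measurable (\<mu> \<Otimes>\<^sub>M \<mu>)"
  proof -
    have "(\<lambda>z. \<phi> (max 0 (F z))) \<in> borel_measurable (\<mu> \<Otimes>\<^sub>M \<mu>)" unfolding F_def measMM by measurable
    moreover have "(\<lambda>z. \<phi> (max 0 (F z))) = (\<lambda>z. \<phi> (F z))" using F0 by (simp add: max_def)
    ultimately show ?thesis by simp
  qed
  have pw1: "ennreal (F z) * \<psi>z z \<le> \<phi> (F z) * indicator GG z" for z
  proof (cases "z \<in> GG")
    case True
    obtain x x' where z: "z = (x, x')" by (cases z)
    have fx: "0 < f x" "0 < f x'" using True z by (auto simp: GG_def G_def)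
    have "(\<rho> x * \<rho> x') powr p = \<rho> x powr p * \<rho> x' powr p" using \<rho>0 by (simp add: powr_mult)
    also have "\<dots> = 1 / F z" using fx by (simp add: \<rho>p G_def F_def z)
    finally have e: "(\<rho> x * \<rho> x') powr p = 1 / F z" .
    have Fp: "0 < F z" using fx by (simp add: F_def z)
    have "ennreal (F z) * \<psi>z z = ennreal (F z) * (ennreal (1 / F z) * \<phi> (F z))"
      using Fp by (simp add: \<psi>z_def z e psi_def)
    also have "\<dots> = (ennreal (F z) * ennreal (1 / F z)) * \<phi> (F z)"
      by (simp only: mult.assoc)
    also have "\<dots> = \<phi> (F z)"
    proof -
      have "ennreal (F z) * ennreal (1 / F z) = ennreal (F z * (1 / F z))"
        using Fp by (intro ennreal_mult[symmetric]) auto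
      also have "\<dots> = 1" using Fp by simp
      finally show ?thesis by simp
    qed
    finally show ?thesis using True by simp
  next
    case False
    obtain x x' where z: "z = (x, x')" by (cases z)
    have "F z = 0" using False f0 z by (auto simp: GG_def G_def F_def not_less intro: antisym)
    then show ?thesis by simp
  qed
  have pw2: "(indicator W z :: ennreal) * \<psi>z z = phi_inf \<phi> * indicator W z" for z
  proof (cases "z \<in> W")
    case True
    obtain x x' where z: "z = (x, x')" by (cases z)
    have "\<rho> x * \<rho> x' = 0" using True z \<rho>N by (auto simp: W_def)
    then show ?thesis using True p by (simp add: \<psi>z_def z psi_def)
  qed simp
  have "(\<integral>\<^sup>+z. \<psi>z z \<partial>(P \<Otimes>\<^sub>M P)) = (\<integral>\<^sup>+z. \<psi>z z \<partial>msum (density (\<mu> \<Otimes>\<^sub>M \<mu>) (\<lambda>z. ennreal (F z))) S)"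
    by (subst PPm) (rule refl)
  also have "\<dots> = (\<integral>\<^sup>+z. \<psi>z z \<partial>density (\<mu> \<Otimes>\<^sub>M \<mu>) (\<lambda>z. ennreal (F z))) + (\<integral>\<^sup>+z. \<psi>z z \<partial>S)"
    using \<psi>m' sPPMM by (intro nn_integral_msum) (auto simp: S_def)
  also have "(\<integral>\<^sup>+z. \<psi>z z \<partial>density (\<mu> \<Otimes>\<^sub>M \<mu>) (\<lambda>z. ennreal (F z))) = (\<integral>\<^sup>+z. ennreal (F z) * \<psi>z z \<partial>(\<mu> \<Otimes>\<^sub>M \<mu>))"
    using Fm \<psi>m' by (simp add: nn_integral_density)
  also have "\<dots> \<le> (\<integral>\<^sup>+z. \<phi> (F z) * indicator GG z \<partial>(\<mu> \<Otimes>\<^sub>M \<mu>))"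
    by (intro nn_integral_mono pw1)
  also have "(\<integral>\<^sup>+z. \<psi>z z \<partial>S) = (\<integral>\<^sup>+z. indicator W z * \<psi>z z \<partial>(P \<Otimes>\<^sub>M P))"
    unfolding S_def by (rule nn_integral_density[OF iW \<psi>m])
  also have "\<dots> = (\<integral>\<^sup>+z. phi_inf \<phi> * indicator W z \<partial>(P \<Otimes>\<^sub>M P))"
    using pw2 by (intro nn_integral_cong) simp
  also have "\<dots> = phi_inf \<phi> * emeasure (P \<Otimes>\<^sub>M P) W"
    using Ws by (simp add: nn_integral_cmult_indicator)
  finally have I1: "(\<integral>\<^sup>+z. \<psi>z z \<partial>(P \<Otimes>\<^sub>M P)) \<le> (\<integral>\<^sup>+z. \<phi> (F z) * indicator GG z \<partial>(\<mu> \<Otimes>\<^sub>M \<mu>)) + phi_inf \<phi> * emeasure (P \<Otimes>\<^sub>M P) W"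
    by simp
  have cGG: "emeasure (\<mu> \<Otimes>\<^sub>M \<mu>) (- GG) = emeasure \<mu> G * emeasure \<mu> (- G) + emeasure \<mu> (- G) * emeasure \<mu> G + emeasure \<mu> (- G) * emeasure \<mu> (- G)"
  proof -
    have Gs': "G \<in> sets \<mu>" "- G \<in> sets \<mu>" using Gs s\<mu> by auto
    have e: "- GG = (G \<times> (- G)) \<union> (((- G) \<times> G) \<union> ((- G) \<times> (- G)))" unfolding GG_def by auto
    have "emeasure (\<mu> \<Otimes>\<^sub>M \<mu>) (- GG) = emeasure (\<mu> \<Otimes>\<^sub>M \<mu>) (G \<times> (- G)) + emeasure (\<mu> \<Otimes>\<^sub>M \<mu>) (((- G) \<times> G) \<union> ((- G) \<times> (- G)))"
      unfolding e using Gs' by (intro plus_emeasure[symmetric]) auto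
    also have "emeasure (\<mu> \<Otimes>\<^sub>M \<mu>) (((- G) \<times> G) \<union> ((- G) \<times> (- G))) = emeasure (\<mu> \<Otimes>\<^sub>M \<mu>) ((- G) \<times> G) + emeasure (\<mu> \<Otimes>\<^sub>M \<mu>) ((- G) \<times> (- G))"
      using Gs' by (intro plus_emeasure[symmetric]) auto
    finally show ?thesis using Gs' by (simp add: M.emeasure_pair_measure_Times add.assoc)
  qed
  have I2: "(\<integral>\<^sup>+z. \<phi> (F z) * indicator (- GG) z \<partial>(\<mu> \<Otimes>\<^sub>M \<mu>)) = \<phi> 0 * emeasure (\<mu> \<Otimes>\<^sub>M \<mu>) (- GG)"
  proof -
    have "(\<integral>\<^sup>+z. \<phi> (F z) * indicator (- GG) z \<partial>(\<mu> \<Otimes>\<^sub>M \<mu>)) = (\<integral>\<^sup>+z. \<phi> 0 * indicator (- GG) z \<partial>(\<mu> \<Otimes>\<^sub>M \<mu>))"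
    proof (intro nn_integral_cong)
      fix z show "\<phi> (F z) * indicator (- GG) z = \<phi> 0 * indicator (- GG) z"
      proof (cases "z \<in> GG")
        case False
        obtain x x' where z: "z = (x, x')" by (cases z)
        have "F z = 0" using False f0 z by (auto simp: GG_def G_def F_def not_less intro: antisym)
        then show ?thesis by simp
      qed simp
    qed
    also have "\<dots> = \<phi> 0 * emeasure (\<mu> \<Otimes>\<^sub>M \<mu>) (- GG)"
      using cGGs by (intro nn_integral_cmult_indicator) auto
    finally show ?thesis .
  qed
  have I3: "(\<integral>\<^sup>+z. \<phi> (F z) \<partial>(\<mu> \<Otimes>\<^sub>M \<mu>)) = (\<integral>\<^sup>+z. \<phi> (F z) * indicator GG z \<partial>(\<mu> \<Otimes>\<^sub>M \<mu>)) + (\<integral>\<^sup>+z. \<phi> (F z) * indicator (- GG) z \<partial>(\<mu> \<Otimes>\<^sub>M \<mu>))"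
  proof -
    have "(\<integral>\<^sup>+z. \<phi> (F z) \<partial>(\<mu> \<Otimes>\<^sub>M \<mu>)) = (\<integral>\<^sup>+z. \<phi> (F z) * indicator GG z + \<phi> (F z) * indicator (- GG) z \<partial>(\<mu> \<Otimes>\<^sub>M \<mu>))"
      by (intro nn_integral_cong) (simp add: indicator_def)
    also have "\<dots> = (\<integral>\<^sup>+z. \<phi> (F z) * indicator GG z \<partial>(\<mu> \<Otimes>\<^sub>M \<mu>)) + (\<integral>\<^sup>+z. \<phi> (F z) * indicator (- GG) z \<partial>(\<mu> \<Otimes>\<^sub>M \<mu>))"
      using \<phi>Fm GGs cGGs by (intro nn_integral_add) auto
    finally show ?thesis .
  qed
  show ?thesis
    unfolding D SW I3 I2 cGG[symmetric] \<psi>z_def[symmetric]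
    using I1 by (simp add: ac_simps add_right_mono)
qed
end


lemma H_le_L:
  "H_c \<phi> c u v \<le> ereal c + enn2ereal (psi \<phi> u + psi \<phi> v)"
proof -
  have "H_c \<phi> c u v \<le> (if (1::real) = 0 then enn2ereal (\<phi> 0 * ennreal (u + v)) else ereal 1 * L_c \<phi> c (u / 1) (v / 1))"
    unfolding H_c_def by (rule INF_lower) simp
  also have "\<dots> = ereal c + enn2ereal (psi \<phi> u + psi \<phi> v)"
    by (simp add: L_c_def plus_ennreal.rep_eq add.assoc)
  finally show ?thesis .
qed

lemma H_le_0:
  "H_c \<phi> c u v \<le> enn2ereal (\<phi> 0 * ennreal (u + v))"
proof -
  have "H_c \<phi> c u v \<le> (if (0::real) = 0 then enn2ereal (\<phi> 0 * ennreal (u + v)) else ereal 0 * L_c \<phi> c (u / 0) (v / 0))"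
    unfolding H_c_def by (rule INF_lower) simp
  then show ?thesis by simp
qed

lemma sets_borel_pair: "sets (borel :: ('x::second_countable_topology \<times> 'y::second_countable_topology) measure) = sets (borel \<Otimes>\<^sub>M borel)"
  by (simp only: borel_prod)


lemma fst_borel[measurable]: "fst \<in> (borel :: ('x::second_countable_topology \<times> 'y::second_countable_topology) measure) \<rightarrow>\<^sub>M borel"
  using measurable_fst[of "borel::'x measure" "borel::'y measure"] by (simp only: borel_prod)
lemma snd_borel[measurable]: "snd \<in> (borel :: ('x::second_countable_topology \<times> 'y::second_countable_topology) measure) \<rightarrow>\<^sub>M borel"
  using measurable_snd[of "borel::'x measure" "borel::'y measure"] by (simp only: borel_prod)

lemma finite_density_indicator:
  assumes "finite_measure M" "A \<in> sets M"
  shows "finite_measure (density M (indicator A))"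
proof (rule finite_measureI)
  have "emeasure (density M (indicator A)) (space (density M (indicator A))) = \<integral>\<^sup>+x. indicator A x * indicator (space M) x \<partial>M"
    using assms by (subst emeasure_density) auto
  also have "\<dots> = \<integral>\<^sup>+x. indicator A x \<partial>M" by (intro nn_integral_cong) simp
  also have "\<dots> = emeasure M A" using assms by simp
  finally show "emeasure (density M (indicator A)) (space (density M (indicator A))) \<noteq> \<infinity>"
    using finite_measure.emeasure_finite[OF assms(1)] by simp
qed

lemma emeasure_density_indicator_UNIV:
  assumes "A \<in> sets M" "space M = UNIV"
  shows "emeasure (density M (indicator A)) UNIV = emeasure M A"
proof -
  have "emeasure (density M (indicator A)) UNIV = \<integral>\<^sup>+x. indicator A x * indicator UNIV x \<partial>M"
    using assms by (subst emeasure_density) (auto simp: sets.top[of M, simplified assms])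
  also have "\<dots> = emeasure M A" using assms by simp
  finally show ?thesis .
qed

lemma H_le_B:
  assumes "0 \<le> r" "0 \<le> r2" "0 \<le> s" "0 \<le> s2"
  shows "H_c \<phi> c ((r * r2) powr p) ((s * s2) powr p) \<le> enn2ereal (\<phi> 0 * (ennreal (r powr p) * ennreal (r2 powr p) + ennreal (s powr p) * ennreal (s2 powr p)))"
proof -
  have "ennreal ((r * r2) powr p + (s * s2) powr p) = ennreal (r powr p) * ennreal (r2 powr p) + ennreal (s powr p) * ennreal (s2 powr p)"
    using assms by (simp add: powr_mult ennreal_plus[symmetric] ennreal_mult[symmetric] del: ennreal_plus)
  then show ?thesis using H_le_0[of \<phi> c "(r * r2) powr p" "(s * s2) powr p"] by simp
qed

lemma AE_pair_from:
  assumes "finite_measure X" "finite_measure Y" "AE x in X. Q x" "AE y in Y. Q y"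
    "{z \<in> space (X \<Otimes>\<^sub>M Y). Q (fst z) \<and> Q (snd z)} \<in> sets (X \<Otimes>\<^sub>M Y)"
  shows "AE z in X \<Otimes>\<^sub>M Y. Q (fst z) \<and> Q (snd z)"
proof -
  interpret X: finite_measure X by fact
  interpret Y: finite_measure Y by fact
  interpret XY: pair_sigma_finite X Y by unfold_locales
  show ?thesis
  proof (rule XY.AE_pair_measure[OF assms(5)])
    show "AE x in X. AE y in Y. Q (fst (x, y)) \<and> Q (snd (x, y))"
      using assms(3) by eventually_elim (use assms(4) in auto)
  qed
qed


lemma fin_sf: "finite_measure M \<Longrightarrow> sigma_finite_measure M"
proof -
  assume "finite_measure M"
  then interpret finite_measure M .
  show ?thesis by (rule sigma_finite_measure_axioms)
qed

lemma main_bound: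
  fixes \<phi> :: "real \<Rightarrow> ennreal" and lam :: "real \<Rightarrow> real" and p :: real
    and \<Delta> :: "real \<Rightarrow> real \<Rightarrow> real"
    and \<mu> :: "'a::polish_space measure" and \<nu> :: "'b::polish_space measure"
    and \<pi> :: "('a \<times> 'b) measure"
  assumes p: "0 < p" and lsc: "lsc_on_nonneg \<phi>" and \<mu>: "mm_space \<mu>" and \<nu>: "mm_space \<nu>"
    and \<pi>s: "sets \<pi> = sets borel" and \<pi>f: "finite_measure \<pi>"
  shows "CGW \<phi> lam \<Delta> p \<mu> \<nu> \<le> UGW_obj \<phi> lam \<Delta> \<mu> \<nu> \<pi>"
proof -
  have s\<mu>: "sets \<mu> = sets borel" and f\<mu>: "finite_measure \<mu>" using \<mu> by (auto simp: mm_space_def)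
  have s\<nu>: "sets \<nu> = sets borel" and f\<nu>: "finite_measure \<nu>" using \<nu> by (auto simp: mm_space_def)
  have m\<pi>: "measurable \<pi> N' = measurable borel N'" for N' :: "'z measure" by (rule measurable_cong_sets) (simp_all add: \<pi>s)
  define \<pi>1 where "\<pi>1 = distr \<pi> borel fst"
  define \<pi>2 where "\<pi>2 = distr \<pi> borel snd"
  have s\<pi>1: "sets \<pi>1 = sets borel" and s\<pi>2: "sets \<pi>2 = sets borel" by (simp_all add: \<pi>1_def \<pi>2_def)
  have f\<pi>1: "finite_measure \<pi>1" unfolding \<pi>1_def using \<pi>f by (intro finite_measure.finite_measure_distr) (auto simp: m\<pi>)
  have f\<pi>2: "finite_measure \<pi>2" unfolding \<pi>2_def using \<pi>f by (intro finite_measure.finite_measure_distr) (auto simp: m\<pi>)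
  obtain fx Nx where dx: "fx \<in> borel_measurable \<mu>" "\<forall>x. 0 \<le> fx x" "Nx \<in> sets \<mu>" "emeasure \<mu> Nx = 0" "\<forall>x\<in>Nx. fx x = 0"
    "\<forall>A\<in>sets \<mu>. emeasure \<pi>1 A = (\<integral>\<^sup>+x\<in>A. ennreal (fx x) \<partial>\<mu>) + emeasure \<pi>1 (A \<inter> Nx)"
  proof (rule leb1[OF f\<mu> f\<pi>1])
    show "sets \<pi>1 = sets \<mu>" by (simp only: s\<mu> s\<pi>1)
  qed
  obtain fy Ny where dy: "fy \<in> borel_measurable \<nu>" "\<forall>x. 0 \<le> fy x" "Ny \<in> sets \<nu>" "emeasure \<nu> Ny = 0" "\<forall>x\<in>Ny. fy x = 0"
    "\<forall>A\<in>sets \<nu>. emeasure \<pi>2 A = (\<integral>\<^sup>+x\<in>A. ennreal (fy x) \<partial>\<nu>) + emeasure \<pi>2 (A \<inter> Ny)"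
  proof (rule leb1[OF f\<nu> f\<pi>2])
    show "sets \<pi>2 = sets \<nu>" by (simp only: s\<nu> s\<pi>2)
  qed
  have fxm: "fx \<in> borel_measurable borel" using dx(1) by (simp only: measurable_cong_sets[OF s\<mu> refl])
  have Nxs: "Nx \<in> sets borel" using dx(3) by (simp only: s\<mu>)
  have decx: "\<forall>A\<in>sets borel. emeasure \<pi>1 A = (\<integral>\<^sup>+x\<in>A. ennreal (fx x) \<partial>\<mu>) + emeasure \<pi>1 (A \<inter> Nx)"
    using dx(6) by (simp only: s\<mu>)
  have fym: "fy \<in> borel_measurable borel" using dy(1) by (simp only: measurable_cong_sets[OF s\<nu> refl])
  have Nys: "Ny \<in> sets borel" using dy(3) by (simp only: s\<nu>)
  have decy: "\<forall>A\<in>sets borel. emeasure \<pi>2 A = (\<integral>\<^sup>+x\<in>A. ennreal (fy x) \<partial>\<nu>) + emeasure \<pi>2 (A \<inter> Ny)"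
    using dy(6) by (simp only: s\<nu>)
  interpret X: side \<phi> p \<mu> \<pi>1 fx Nx
    by (rule side.intro[OF p lsc s\<mu> f\<mu> s\<pi>1 f\<pi>1 fxm dx(2) Nxs dx(4) dx(5) decx])
  interpret Y: side \<phi> p \<nu> \<pi>2 fy Ny
    by (rule side.intro[OF p lsc s\<nu> f\<nu> s\<pi>2 f\<pi>2 fym dy(2) Nys dy(4) dy(5) decy])
  define T1 where "T1 = (\<lambda>(x,y). ((x, X.\<rho> x), (y, Y.\<rho> y)))"
  define \<mu>' where "\<mu>' = density \<mu> (indicator (- X.G))"
  define \<nu>' where "\<nu>' = density \<nu> (indicator (- Y.G))"
  define e2 where "e2 = (\<lambda>x::'a. ((x, 1::real), (undefined::'b, 0::real)))"
  define e3 where "e3 = (\<lambda>y::'b. ((undefined::'a, 0::real), (y, 1::real)))"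
  define \<alpha>1 where "\<alpha>1 = distr \<pi> borel T1"
  define \<alpha>2 where "\<alpha>2 = distr \<mu>' borel e2"
  define \<alpha>3 where "\<alpha>3 = distr \<nu>' borel e3"
  define \<beta> where "\<beta> = msum \<alpha>2 \<alpha>3"
  define \<alpha> where "\<alpha> = msum \<alpha>1 \<beta>"
  have T1m: "T1 \<in> borel \<rightarrow>\<^sub>M borel"
  proof -
    have "T1 \<in> ((borel::'a measure) \<Otimes>\<^sub>M (borel :: 'b measure)) \<rightarrow>\<^sub>M (((borel::'a measure) \<Otimes>\<^sub>M (borel::real measure)) \<Otimes>\<^sub>M ((borel::'b measure) \<Otimes>\<^sub>M (borel :: real measure)))"
      unfolding T1_def by measurable
    then show ?thesis by (simp only: borel_prod)
  qed
  have e2m: "e2 \<in> borel \<rightarrow>\<^sub>M borel"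
  proof -
    have "e2 \<in> (borel::'a measure) \<rightarrow>\<^sub>M (((borel::'a measure) \<Otimes>\<^sub>M (borel::real measure)) \<Otimes>\<^sub>M ((borel::'b measure) \<Otimes>\<^sub>M (borel :: real measure)))"
      unfolding e2_def by measurable
    then show ?thesis by (simp only: borel_prod)
  qed
  have e3m: "e3 \<in> borel \<rightarrow>\<^sub>M borel"
  proof -
    have "e3 \<in> (borel::'b measure) \<rightarrow>\<^sub>M (((borel::'a measure) \<Otimes>\<^sub>M (borel::real measure)) \<Otimes>\<^sub>M ((borel::'b measure) \<Otimes>\<^sub>M (borel :: real measure)))"
      unfolding e3_def by measurable
    then show ?thesis by (simp only: borel_prod)
  qed
  have s\<mu>': "sets \<mu>' = sets borel" and s\<nu>': "sets \<nu>' = sets borel" by (simp_all add: \<mu>'_def \<nu>'_def s\<mu> s\<nu>)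
  have f\<mu>': "finite_measure \<mu>'" unfolding \<mu>'_def using f\<mu> by (rule finite_density_indicator) (simp add: s\<mu>)
  have f\<nu>': "finite_measure \<nu>'" unfolding \<nu>'_def using f\<nu> by (rule finite_density_indicator) (simp add: s\<nu>)
  have T1m': "T1 \<in> \<pi> \<rightarrow>\<^sub>M borel" using T1m by (simp add: m\<pi>)
  have e2m': "e2 \<in> \<mu>' \<rightarrow>\<^sub>M borel" using e2m by (simp add: measurable_cong_sets[OF s\<mu>' refl])
  have e3m': "e3 \<in> \<nu>' \<rightarrow>\<^sub>M borel" using e3m by (simp add: measurable_cong_sets[OF s\<nu>' refl])
  have s\<alpha>1: "sets \<alpha>1 = sets borel" and s\<alpha>2: "sets \<alpha>2 = sets borel" and s\<alpha>3: "sets \<alpha>3 = sets borel"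
    and s\<beta>: "sets \<beta> = sets borel" and s\<alpha>: "sets \<alpha> = sets borel"
    by (simp_all add: \<alpha>1_def \<alpha>2_def \<alpha>3_def \<beta>_def \<alpha>_def)
  have f\<alpha>1: "finite_measure \<alpha>1" unfolding \<alpha>1_def using \<pi>f T1m' by (rule finite_measure.finite_measure_distr)
  have f\<alpha>2: "finite_measure \<alpha>2" unfolding \<alpha>2_def using f\<mu>' e2m' by (rule finite_measure.finite_measure_distr)
  have f\<alpha>3: "finite_measure \<alpha>3" unfolding \<alpha>3_def using f\<nu>' e3m' by (rule finite_measure.finite_measure_distr)
  have f\<beta>: "finite_measure \<beta>" unfolding \<beta>_def using s\<alpha>2 s\<alpha>3 f\<alpha>2 f\<alpha>3 by (intro finite_measure_msum) auto
  have f\<alpha>: "finite_measure \<alpha>" unfolding \<alpha>_def using s\<alpha>1 s\<beta> f\<alpha>1 f\<beta> by (intro finite_measure_msum) auto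
  have U: "\<alpha> \<in> U_p p \<mu> \<nu>"
  proof -
    let ?E0 = "((borel::'a measure) \<Otimes>\<^sub>M (borel::real measure)) \<Otimes>\<^sub>M ((borel::'b measure) \<Otimes>\<^sub>M (borel :: real measure))"
    have sE0: "sets (borel :: (('a \<times> real) \<times> ('b \<times> real)) measure) = sets ?E0" by (simp only: borel_prod)
    have mE: "measurable (borel :: (('a \<times> real) \<times> ('b \<times> real)) measure) N' = measurable ?E0 N'" for N' :: "'z measure"
      by (rule measurable_cong_sets[OF sE0 refl])
    define Q where "Q = (\<lambda>w::('a \<times> real) \<times> ('b \<times> real). 0 \<le> snd (fst w) \<and> 0 \<le> snd (snd w))"
    have QE: "{x \<in> space ?E0. Q x} \<in> sets ?E0" unfolding Q_def by measurable
    have Qs: "{x \<in> space borel. Q x} \<in> sets borel" using QE sE0 by (simp add: space_pair_measure)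
    have Q1: "AE x in \<alpha>1. Q x"
      unfolding \<alpha>1_def using Qs T1m' by (subst AE_distr_iff) (auto simp: Q_def T1_def X.\<rho>0 Y.\<rho>0 split: prod.splits)
    have Q2: "AE x in \<alpha>2. Q x"
      unfolding \<alpha>2_def using Qs e2m' by (subst AE_distr_iff) (auto simp: Q_def e2_def)
    have Q3: "AE x in \<alpha>3. Q x"
      unfolding \<alpha>3_def using Qs e3m' by (subst AE_distr_iff) (auto simp: Q_def e3_def)
    have Q\<beta>: "AE x in \<beta>. Q x"
      unfolding \<beta>_def by (rule AE_msum[OF _ Q2 Q3]) (simp add: s\<alpha>2 s\<alpha>3)
    have Q\<alpha>: "AE x in \<alpha>. Q x"
      unfolding \<alpha>_def by (rule AE_msum[OF _ Q1 Q\<beta>]) (simp add: s\<alpha>1 s\<beta>)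
    have neg: "emeasure \<alpha> {((x, r), (y, s)). r < 0 \<or> s < 0} = 0"
    proof -
      have eq: "{((x, r), (y, s)). r < 0 \<or> s < 0} = {x \<in> space \<alpha>. \<not> Q x}"
        using sets_eq_imp_space_eq[OF s\<alpha>] by (auto simp: Q_def)
      have Qs': "{x. Q x} \<in> sets borel" using Qs by simp
      have e2: "{x \<in> space \<alpha>. \<not> Q x} = space borel - {x. Q x}" using sets_eq_imp_space_eq[OF s\<alpha>] by auto
      have "{x \<in> space \<alpha>. \<not> Q x} \<in> sets \<alpha>"
        unfolding e2 s\<alpha> by (rule sets.compl_sets[OF Qs'])
      then show ?thesis unfolding eq using Q\<alpha> by (simp add: AE_iff_measurable[OF _ refl])
    qed
    have s32: "sets \<alpha>3 = sets \<alpha>2" and s\<beta>1: "sets \<beta> = sets \<alpha>1" using s\<alpha>1 s\<alpha>2 s\<alpha>3 s\<beta> by simp_all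
    have \<mu>'d: "\<mu>' = density \<mu> (\<lambda>x. ennreal (indicator (- X.G) x))" unfolding \<mu>'_def by (simp add: ennreal_indicator)
    have \<nu>'d: "\<nu>' = density \<nu> (\<lambda>x. ennreal (indicator (- Y.G) x))" unfolding \<nu>'_def by (simp add: ennreal_indicator)
    have fstm: "fst \<in> \<pi> \<rightarrow>\<^sub>M borel" by (simp add: m\<pi>)
    have sndm: "snd \<in> \<pi> \<rightarrow>\<^sub>M borel" by (simp add: m\<pi>)
    have margx: "integrable \<alpha> (\<lambda>((x, r), (y, s)). \<xi> x * r powr p) \<and> (\<integral>((x, r), (y, s)). \<xi> x * r powr p \<partial>\<alpha>) = (\<integral>x. \<xi> x \<partial>\<mu>)"
      if \<xi>: "continuous_on UNIV \<xi> \<and> bounded (range \<xi>)" for \<xi> :: "'a \<Rightarrow> real"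
    proof -
      have \<xi>m: "\<xi> \<in> borel_measurable borel" using \<xi> by (intro borel_measurable_continuous_onI) auto
      obtain K where K: "\<And>x. \<bar>\<xi> x\<bar> \<le> K" using \<xi> unfolding bounded_iff by auto
      define v where "v = (\<lambda>w::('a \<times> real) \<times> ('b \<times> real). \<xi> (fst (fst w)) * snd (fst w) powr p)"
      have veq: "(\<lambda>((x, r), (y, s)). \<xi> x * r powr p) = v" by (auto simp: v_def fun_eq_iff)
      have vm: "v \<in> borel_measurable borel" unfolding v_def mE using \<xi>m by measurable
      have i1: "integrable \<alpha>1 v" "integral\<^sup>L \<alpha>1 v = (\<integral>x. indicator X.G x * \<xi> x \<partial>\<mu>)"
      proof -
        have gm: "(\<lambda>x. \<xi> x * X.\<rho> x powr p) \<in> borel_measurable borel" using \<xi>m by measurable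
        have vT: "(\<lambda>z. v (T1 z)) = (\<lambda>z. (\<lambda>x. \<xi> x * X.\<rho> x powr p) (fst z))"
          by (simp add: v_def T1_def case_prod_beta)
        have e: "integrable \<alpha>1 v \<longleftrightarrow> integrable \<pi>1 (\<lambda>x. \<xi> x * X.\<rho> x powr p)"
          unfolding \<alpha>1_def \<pi>1_def integrable_distr_eq[OF T1m' vm] vT integrable_distr_eq[OF fstm gm] ..
        show "integrable \<alpha>1 v" using e X.S2(1)[OF \<xi>m K] by simp
        have "integral\<^sup>L \<alpha>1 v = (\<integral>x. \<xi> x * X.\<rho> x powr p \<partial>\<pi>1)"
          unfolding \<alpha>1_def \<pi>1_def integral_distr[OF T1m' vm] vT integral_distr[OF fstm gm] ..
        then show "integral\<^sup>L \<alpha>1 v = (\<integral>x. indicator X.G x * \<xi> x \<partial>\<mu>)" using X.S2(2)[OF \<xi>m K] by simp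
      qed
      have ibd: "integrable \<mu> (\<lambda>x. indicator A x * \<xi> x)" if "A \<in> sets borel" for A
      proof (rule finite_measure.integrable_const_bound[OF f\<mu>, where B=K])
        show "AE x in \<mu>. norm (indicator A x * \<xi> x) \<le> K" using K
          by (auto simp: indicator_def intro: order_trans[OF _ K])
        show "(\<lambda>x. indicator A x * \<xi> x) \<in> borel_measurable \<mu>" using \<xi>m that s\<mu> by (simp add: measurable_cong_sets[OF s\<mu> refl])
      qed
      have i2: "integrable \<alpha>2 v" "integral\<^sup>L \<alpha>2 v = (\<integral>x. indicator (- X.G) x * \<xi> x \<partial>\<mu>)"
      proof -
        have ve: "(\<lambda>x. v (e2 x)) = \<xi>" by (simp add: v_def e2_def fun_eq_iff)
        have \<xi>m\<mu>: "\<xi> \<in> borel_measurable \<mu>" using \<xi>m by (simp add: measurable_cong_sets[OF s\<mu> refl])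
        have im: "(\<lambda>x. indicator (- X.G) x :: real) \<in> borel_measurable \<mu>"
          using X.Gs by (simp add: measurable_cong_sets[OF s\<mu> refl])
        have "integrable \<alpha>2 v \<longleftrightarrow> integrable \<mu>' \<xi>"
          unfolding \<alpha>2_def integrable_distr_eq[OF e2m' vm] ve ..
        also have "\<dots> \<longleftrightarrow> integrable \<mu> (\<lambda>x. indicator (- X.G) x * \<xi> x)"
          unfolding \<mu>'d by (subst integrable_density[OF \<xi>m\<mu> im]) auto
        finally have e: "integrable \<alpha>2 v \<longleftrightarrow> integrable \<mu> (\<lambda>x. indicator (- X.G) x * \<xi> x)" .
        show "integrable \<alpha>2 v" using e ibd[OF borel_comp[OF X.Gs]] by simp
        have "integral\<^sup>L \<alpha>2 v = integral\<^sup>L \<mu>' \<xi>"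
          unfolding \<alpha>2_def integral_distr[OF e2m' vm] ve ..
        also have "\<dots> = (\<integral>x. indicator (- X.G) x * \<xi> x \<partial>\<mu>)"
          unfolding \<mu>'d by (subst integral_density[OF \<xi>m\<mu> im]) auto
        finally show "integral\<^sup>L \<alpha>2 v = (\<integral>x. indicator (- X.G) x * \<xi> x \<partial>\<mu>)" .
      qed
      have i3: "integrable \<alpha>3 v" "integral\<^sup>L \<alpha>3 v = 0"
      proof -
        have z: "(\<lambda>y. v (e3 y)) = (\<lambda>y. 0)" by (simp add: v_def e3_def fun_eq_iff)
        show "integrable \<alpha>3 v" unfolding \<alpha>3_def using vm by (simp add: integrable_distr_eq[OF e3m'] z)
        show "integral\<^sup>L \<alpha>3 v = 0" unfolding \<alpha>3_def using vm by (simp add: integral_distr[OF e3m'] z)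
      qed
      have iB: "integrable \<beta> v" unfolding \<beta>_def using i2(1) i3(1) by (simp add: integrable_msum[OF s32])
      have int: "integrable \<alpha> v" unfolding \<alpha>_def using i1(1) iB by (simp add: integrable_msum[OF s\<beta>1])
      have "integral\<^sup>L \<alpha> v = (\<integral>x. indicator X.G x * \<xi> x \<partial>\<mu>) + (\<integral>x. indicator (- X.G) x * \<xi> x \<partial>\<mu>)"
        unfolding \<alpha>_def \<beta>_def
        using i1 i2 i3 iB[unfolded \<beta>_def] by (simp add: integral_msum[OF s\<beta>1[unfolded \<beta>_def]] integral_msum[OF s32])
      also have "\<dots> = (\<integral>x. indicator X.G x * \<xi> x + indicator (- X.G) x * \<xi> x \<partial>\<mu>)"
        using ibd[OF X.Gs] ibd[OF borel_comp[OF X.Gs]] by (rule Bochner_Integration.integral_add[symmetric])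
      also have "\<dots> = (\<integral>x. \<xi> x \<partial>\<mu>)" by (intro Bochner_Integration.integral_cong) (auto simp: indicator_def)
      finally show ?thesis using int by (simp add: veq)
    qed
    have margy: "integrable \<alpha> (\<lambda>((x, r), (y, s)). \<zeta> y * s powr p) \<and> (\<integral>((x, r), (y, s)). \<zeta> y * s powr p \<partial>\<alpha>) = (\<integral>y. \<zeta> y \<partial>\<nu>)"
      if \<zeta>: "continuous_on UNIV \<zeta> \<and> bounded (range \<zeta>)" for \<zeta> :: "'b \<Rightarrow> real"
    proof -
      have \<zeta>m: "\<zeta> \<in> borel_measurable borel" using \<zeta> by (intro borel_measurable_continuous_onI) auto
      obtain K where K: "\<And>x. \<bar>\<zeta> x\<bar> \<le> K" using \<zeta> unfolding bounded_iff by auto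
      define v where "v = (\<lambda>w::('a \<times> real) \<times> ('b \<times> real). \<zeta> (fst (snd w)) * snd (snd w) powr p)"
      have veq: "(\<lambda>((x, r), (y, s)). \<zeta> y * s powr p) = v" by (auto simp: v_def fun_eq_iff)
      have vm: "v \<in> borel_measurable borel" unfolding v_def mE using \<zeta>m by measurable
      have i1: "integrable \<alpha>1 v" "integral\<^sup>L \<alpha>1 v = (\<integral>x. indicator Y.G x * \<zeta> x \<partial>\<nu>)"
      proof -
        have gm: "(\<lambda>x. \<zeta> x * Y.\<rho> x powr p) \<in> borel_measurable borel" using \<zeta>m by measurable
        have vT: "(\<lambda>z. v (T1 z)) = (\<lambda>z. (\<lambda>x. \<zeta> x * Y.\<rho> x powr p) (snd z))"
          by (simp add: v_def T1_def case_prod_beta)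
        have e: "integrable \<alpha>1 v \<longleftrightarrow> integrable \<pi>2 (\<lambda>x. \<zeta> x * Y.\<rho> x powr p)"
          unfolding \<alpha>1_def \<pi>2_def integrable_distr_eq[OF T1m' vm] vT integrable_distr_eq[OF sndm gm] ..
        show "integrable \<alpha>1 v" using e Y.S2(1)[OF \<zeta>m K] by simp
        have "integral\<^sup>L \<alpha>1 v = (\<integral>x. \<zeta> x * Y.\<rho> x powr p \<partial>\<pi>2)"
          unfolding \<alpha>1_def \<pi>2_def integral_distr[OF T1m' vm] vT integral_distr[OF sndm gm] ..
        then show "integral\<^sup>L \<alpha>1 v = (\<integral>x. indicator Y.G x * \<zeta> x \<partial>\<nu>)" using Y.S2(2)[OF \<zeta>m K] by simp
      qed
      have ibd: "integrable \<nu> (\<lambda>x. indicator A x * \<zeta> x)" if "A \<in> sets borel" for A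
      proof (rule finite_measure.integrable_const_bound[OF f\<nu>, where B=K])
        show "AE x in \<nu>. norm (indicator A x * \<zeta> x) \<le> K" using K
          by (auto simp: indicator_def intro: order_trans[OF _ K])
        show "(\<lambda>x. indicator A x * \<zeta> x) \<in> borel_measurable \<nu>" using \<zeta>m that s\<nu> by (simp add: measurable_cong_sets[OF s\<nu> refl])
      qed
      have i3: "integrable \<alpha>3 v" "integral\<^sup>L \<alpha>3 v = (\<integral>x. indicator (- Y.G) x * \<zeta> x \<partial>\<nu>)"
      proof -
        have ve: "(\<lambda>x. v (e3 x)) = \<zeta>" by (simp add: v_def e3_def fun_eq_iff)
        have \<zeta>m\<nu>: "\<zeta> \<in> borel_measurable \<nu>" using \<zeta>m by (simp add: measurable_cong_sets[OF s\<nu> refl])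
        have im: "(\<lambda>x. indicator (- Y.G) x :: real) \<in> borel_measurable \<nu>"
          using Y.Gs by (simp add: measurable_cong_sets[OF s\<nu> refl])
        have "integrable \<alpha>3 v \<longleftrightarrow> integrable \<nu>' \<zeta>"
          unfolding \<alpha>3_def integrable_distr_eq[OF e3m' vm] ve ..
        also have "\<dots> \<longleftrightarrow> integrable \<nu> (\<lambda>x. indicator (- Y.G) x * \<zeta> x)"
          unfolding \<nu>'d by (subst integrable_density[OF \<zeta>m\<nu> im]) auto
        finally have e: "integrable \<alpha>3 v \<longleftrightarrow> integrable \<nu> (\<lambda>x. indicator (- Y.G) x * \<zeta> x)" .
        show "integrable \<alpha>3 v" using e ibd[OF borel_comp[OF Y.Gs]] by simp
        have "integral\<^sup>L \<alpha>3 v = integral\<^sup>L \<nu>' \<zeta>"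
          unfolding \<alpha>3_def integral_distr[OF e3m' vm] ve ..
        also have "\<dots> = (\<integral>x. indicator (- Y.G) x * \<zeta> x \<partial>\<nu>)"
          unfolding \<nu>'d by (subst integral_density[OF \<zeta>m\<nu> im]) auto
        finally show "integral\<^sup>L \<alpha>3 v = (\<integral>x. indicator (- Y.G) x * \<zeta> x \<partial>\<nu>)" .
      qed
      have i2: "integrable \<alpha>2 v" "integral\<^sup>L \<alpha>2 v = 0"
      proof -
        have z: "(\<lambda>y. v (e2 y)) = (\<lambda>y. 0)" by (simp add: v_def e2_def fun_eq_iff)
        show "integrable \<alpha>2 v" unfolding \<alpha>2_def using vm by (simp add: integrable_distr_eq[OF e2m'] z)
        show "integral\<^sup>L \<alpha>2 v = 0" unfolding \<alpha>2_def using vm by (simp add: integral_distr[OF e2m'] z)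
      qed
      have iB: "integrable \<beta> v" unfolding \<beta>_def using i3(1) i2(1) by (simp add: integrable_msum[OF s32])
      have int: "integrable \<alpha> v" unfolding \<alpha>_def using i1(1) iB by (simp add: integrable_msum[OF s\<beta>1])
      have "integral\<^sup>L \<alpha> v = (\<integral>x. indicator Y.G x * \<zeta> x \<partial>\<nu>) + (\<integral>x. indicator (- Y.G) x * \<zeta> x \<partial>\<nu>)"
        unfolding \<alpha>_def \<beta>_def
        using i1 i3 i2 iB[unfolded \<beta>_def] by (simp add: integral_msum[OF s\<beta>1[unfolded \<beta>_def]] integral_msum[OF s32])
      also have "\<dots> = (\<integral>x. indicator Y.G x * \<zeta> x + indicator (- Y.G) x * \<zeta> x \<partial>\<nu>)"
        using ibd[OF Y.Gs] ibd[OF borel_comp[OF Y.Gs]] by (rule Bochner_Integration.integral_add[symmetric])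
      also have "\<dots> = (\<integral>y. \<zeta> y \<partial>\<nu>)" by (intro Bochner_Integration.integral_cong) (auto simp: indicator_def)
      finally show ?thesis using int by (simp add: veq)
    qed
    show ?thesis unfolding U_p_def using s\<alpha> f\<alpha> neg margx margy by blast
  qed
  have C: "CGW_obj \<phi> lam \<Delta> p \<alpha> \<le> UGW_obj \<phi> lam \<Delta> \<mu> \<nu> \<pi>"
  proof -
    let ?E0 = "((borel::'a measure) \<Otimes>\<^sub>M (borel::real measure)) \<Otimes>\<^sub>M ((borel::'b measure) \<Otimes>\<^sub>M (borel :: real measure))"
    let ?P0 = "(borel::'a measure) \<Otimes>\<^sub>M (borel::'b measure)"
    have sE0: "sets (borel :: (('a \<times> real) \<times> ('b \<times> real)) measure) = sets ?E0" by (simp only: borel_prod)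
    have sP0: "sets (borel :: ('a \<times> 'b) measure) = sets ?P0" by (simp only: borel_prod)
    have sXY: "sets (X \<Otimes>\<^sub>M Y) = sets (?E0 \<Otimes>\<^sub>M ?E0)" if "sets X = sets borel" "sets Y = sets borel"
      for X Y :: "(('a \<times> real) \<times> ('b \<times> real)) measure"
      using that sE0 by (intro sets_pair_measure_cong) auto
    have m\<alpha>\<alpha>: "measurable (\<alpha> \<Otimes>\<^sub>M \<alpha>) N' = measurable (?E0 \<Otimes>\<^sub>M ?E0) N'" for N' :: "'z measure"
      by (rule measurable_cong_sets[OF sXY[OF s\<alpha> s\<alpha>] refl])
    have m\<alpha>\<alpha>2: "measurable N' (\<alpha> \<Otimes>\<^sub>M \<alpha>) = measurable N' (?E0 \<Otimes>\<^sub>M ?E0)" for N' :: "'z measure"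
      by (rule measurable_cong_sets[OF refl sXY[OF s\<alpha> s\<alpha>]])
    have s\<pi>\<pi>: "sets (\<pi> \<Otimes>\<^sub>M \<pi>) = sets (?P0 \<Otimes>\<^sub>M ?P0)" using \<pi>s sP0 by (intro sets_pair_measure_cong) auto
    have m\<pi>\<pi>: "measurable (\<pi> \<Otimes>\<^sub>M \<pi>) N' = measurable (?P0 \<Otimes>\<^sub>M ?P0) N'" for N' :: "'z measure"
      by (rule measurable_cong_sets[OF s\<pi>\<pi> refl])
    have m\<pi>\<pi>2: "measurable N' (\<pi> \<Otimes>\<^sub>M \<pi>) = measurable N' (?P0 \<Otimes>\<^sub>M ?P0)" for N' :: "'z measure"
      by (rule measurable_cong_sets[OF refl s\<pi>\<pi>])
    define H :: "((('a \<times> real) \<times> ('b \<times> real)) \<times> (('a \<times> real) \<times> ('b \<times> real))) \<Rightarrow> ereal" where "H = (\<lambda>(((x, r), (y, s)), ((x', r'), (y', s'))). cone_D_pow_q \<phi> lam \<Delta> p (dist x x') (r * r') (dist y y') (s * s'))"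
    define Lam :: "(('a \<times> 'b) \<times> ('a \<times> 'b)) \<Rightarrow> ereal" where "Lam = (\<lambda>((x, y), (x', y')). ereal (lam (\<Delta> (dist x x') (dist y y'))))"
    define T where "T = (\<lambda>(z, z'). (T1 z, T1 z'))"
    define Pj :: "((('a \<times> real) \<times> ('b \<times> real)) \<times> (('a \<times> real) \<times> ('b \<times> real))) \<Rightarrow> (('a \<times> 'b) \<times> ('a \<times> 'b))" where "Pj = (\<lambda>w. ((fst (fst (fst w)), fst (snd (fst w))), (fst (fst (snd w)), fst (snd (snd w)))))"
    define A :: "((('a \<times> real) \<times> ('b \<times> real)) \<times> (('a \<times> real) \<times> ('b \<times> real))) \<Rightarrow> ennreal" where "A = (\<lambda>w. psi \<phi> ((snd (fst (fst w)) * snd (fst (snd w))) powr p) + psi \<phi> ((snd (snd (fst w)) * snd (snd (snd w))) powr p))"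
    define Pr where "Pr = (\<lambda>w::('a \<times> real) \<times> ('b \<times> real). ennreal (snd (fst w) powr p))"
    define Ps where "Ps = (\<lambda>w::('a \<times> real) \<times> ('b \<times> real). ennreal (snd (snd w) powr p))"
    define B where "B = (\<lambda>z. \<phi> 0 * (Pr (fst z) * Pr (snd z) + Ps (fst z) * Ps (snd z)))"
    define R where "R = (\<lambda>i::nat. if i = 0 then \<alpha>1 \<Otimes>\<^sub>M \<beta> else if i = 1 then \<beta> \<Otimes>\<^sub>M \<alpha>1 else \<beta> \<Otimes>\<^sub>M \<beta>)"
    have Tm: "T \<in> (\<pi> \<Otimes>\<^sub>M \<pi>) \<rightarrow>\<^sub>M (\<alpha> \<Otimes>\<^sub>M \<alpha>)"
      unfolding m\<pi>\<pi> m\<alpha>\<alpha>2 T_def T1_def by measurable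
    have Pjm: "Pj \<in> (\<alpha> \<Otimes>\<^sub>M \<alpha>) \<rightarrow>\<^sub>M (\<pi> \<Otimes>\<^sub>M \<pi>)"
      unfolding m\<pi>\<pi>2 m\<alpha>\<alpha> Pj_def by measurable
    have PT: "Pj (T z) = z" for z by (auto simp: Pj_def T_def T1_def split: prod.splits)
    have Am: "A \<in> borel_measurable (\<alpha> \<Otimes>\<^sub>M \<alpha>)"
      unfolding m\<alpha>\<alpha> A_def by measurable
    have HL: "H w \<le> Lam (Pj w) + enn2ereal (A w)" for w
      by (auto simp: H_def Lam_def Pj_def A_def cone_D_pow_q_def H_le_L split: prod.splits)
    define Q where "Q = (\<lambda>w::('a \<times> real) \<times> ('b \<times> real). 0 \<le> snd (fst w) \<and> 0 \<le> snd (snd w))"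
    have QE: "{x \<in> space ?E0. Q x} \<in> sets ?E0" unfolding Q_def by measurable
    have Qs: "{x \<in> space borel. Q x} \<in> sets borel" using QE sE0 by (simp add: space_pair_measure)
    have QQE: "{z \<in> space (?E0 \<Otimes>\<^sub>M ?E0). Q (fst z) \<and> Q (snd z)} \<in> sets (?E0 \<Otimes>\<^sub>M ?E0)"
      unfolding Q_def by measurable
    have HBgen: "AE w in X \<Otimes>\<^sub>M Y. H w \<le> enn2ereal (B w)"
      if XY: "sets X = sets borel" "sets Y = sets borel" "finite_measure X" "finite_measure Y"
        "AE x in X. Q x" "AE y in Y. Q y" for X Y
    proof -
      have spX: "space X = UNIV" using sets_eq_imp_space_eq[OF XY(1)] by simp
      have spY: "space Y = UNIV" using sets_eq_imp_space_eq[OF XY(2)] by simp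
      have "{z \<in> space (X \<Otimes>\<^sub>M Y). Q (fst z) \<and> Q (snd z)} \<in> sets (X \<Otimes>\<^sub>M Y)"
        using QQE sXY[OF XY(1,2)] by (simp add: space_pair_measure spX spY)
      then have "AE z in X \<Otimes>\<^sub>M Y. Q (fst z) \<and> Q (snd z)"
        by (rule AE_pair_from[OF XY(3,4,5,6)])
      then show ?thesis
      proof (rule eventually_mono)
        fix w assume "Q (fst w) \<and> Q (snd w)"
        then show "H w \<le> enn2ereal (B w)"
          by (auto simp: Q_def H_def B_def Pr_def Ps_def cone_D_pow_q_def intro!: H_le_B split: prod.splits)
      qed
    qed
    have Q1: "AE x in \<alpha>1. Q x"
      unfolding \<alpha>1_def using Qs T1m' by (subst AE_distr_iff) (auto simp: Q_def T1_def X.\<rho>0 Y.\<rho>0 split: prod.splits)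
    have Q2: "AE x in \<alpha>2. Q x"
      unfolding \<alpha>2_def using Qs e2m' by (subst AE_distr_iff) (auto simp: Q_def e2_def)
    have Q3: "AE x in \<alpha>3. Q x"
      unfolding \<alpha>3_def using Qs e3m' by (subst AE_distr_iff) (auto simp: Q_def e3_def)
    have Q\<beta>: "AE x in \<beta>. Q x"
      unfolding \<beta>_def by (rule AE_msum[OF _ Q2 Q3]) (simp add: s\<alpha>2 s\<alpha>3)
    have HB: "AE w in R i. H w \<le> enn2ereal (B w)" if "i \<in> {0,1,2}" for i
      using that HBgen[OF s\<alpha>1 s\<beta> f\<alpha>1 f\<beta> Q1 Q\<beta>] HBgen[OF s\<beta> s\<alpha>1 f\<beta> f\<alpha>1 Q\<beta> Q1]
        HBgen[OF s\<beta> s\<beta> f\<beta> f\<beta> Q\<beta> Q\<beta>]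
      unfolding R_def by auto
    have split: "integral\<^sup>N (\<alpha> \<Otimes>\<^sub>M \<alpha>) k = integral\<^sup>N (\<pi> \<Otimes>\<^sub>M \<pi>) (\<lambda>z. k (T z)) + (\<Sum>i\<in>{0,1,2}. integral\<^sup>N (R i) k)"
      if k: "k \<in> borel_measurable (\<alpha> \<Otimes>\<^sub>M \<alpha>)" for k
    proof -
      have sb1: "sets \<beta> = sets \<alpha>1" using s\<beta> s\<alpha>1 by simp
      have km: "k \<in> borel_measurable (X \<Otimes>\<^sub>M Y)" if "sets X = sets borel" "sets Y = sets borel" for X Y
        using k measurable_cong_sets[OF sXY[OF that] refl] m\<alpha>\<alpha> by blast
      have sPair: "sets (X \<Otimes>\<^sub>M Y) = sets (X' \<Otimes>\<^sub>M Y')" if "sets X = sets borel" "sets Y = sets borel" "sets X' = sets borel" "sets Y' = sets borel"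
        for X Y X' Y' :: "(('a \<times> real) \<times> ('b \<times> real)) measure"
        using sXY[OF that(1,2)] sXY[OF that(3,4)] by simp
      have e1: "\<alpha> \<Otimes>\<^sub>M \<alpha> = msum (\<alpha>1 \<Otimes>\<^sub>M \<alpha>) (\<beta> \<Otimes>\<^sub>M \<alpha>)"
        using msum_pair_left[OF sb1 f\<alpha>1 f\<beta> f\<alpha>] by (simp only: \<alpha>_def[symmetric])
      have e2: "\<alpha>1 \<Otimes>\<^sub>M \<alpha> = msum (\<alpha>1 \<Otimes>\<^sub>M \<alpha>1) (\<alpha>1 \<Otimes>\<^sub>M \<beta>)"
        unfolding \<alpha>_def by (rule msum_pair_right[OF sb1 f\<alpha>1 f\<beta> f\<alpha>1])
      have e3: "\<beta> \<Otimes>\<^sub>M \<alpha> = msum (\<beta> \<Otimes>\<^sub>M \<alpha>1) (\<beta> \<Otimes>\<^sub>M \<beta>)"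
        unfolding \<alpha>_def by (rule msum_pair_right[OF sb1 f\<alpha>1 f\<beta> f\<beta>])
      have "integral\<^sup>N (\<alpha> \<Otimes>\<^sub>M \<alpha>) k = integral\<^sup>N (\<alpha>1 \<Otimes>\<^sub>M \<alpha>) k + integral\<^sup>N (\<beta> \<Otimes>\<^sub>M \<alpha>) k"
        unfolding e1 by (rule nn_integral_msum[OF sPair[OF s\<beta> s\<alpha> s\<alpha>1 s\<alpha>] km[OF s\<alpha>1 s\<alpha>]])
      also have "integral\<^sup>N (\<alpha>1 \<Otimes>\<^sub>M \<alpha>) k = integral\<^sup>N (\<alpha>1 \<Otimes>\<^sub>M \<alpha>1) k + integral\<^sup>N (\<alpha>1 \<Otimes>\<^sub>M \<beta>) k"
        unfolding e2 by (rule nn_integral_msum[OF sPair[OF s\<alpha>1 s\<beta> s\<alpha>1 s\<alpha>1] km[OF s\<alpha>1 s\<alpha>1]])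
      also have "integral\<^sup>N (\<beta> \<Otimes>\<^sub>M \<alpha>) k = integral\<^sup>N (\<beta> \<Otimes>\<^sub>M \<alpha>1) k + integral\<^sup>N (\<beta> \<Otimes>\<^sub>M \<beta>) k"
        unfolding e3 by (rule nn_integral_msum[OF sPair[OF s\<beta> s\<beta> s\<beta> s\<alpha>1] km[OF s\<beta> s\<alpha>1]])
      also have "integral\<^sup>N (\<alpha>1 \<Otimes>\<^sub>M \<alpha>1) k = integral\<^sup>N (\<pi> \<Otimes>\<^sub>M \<pi>) (\<lambda>z. k (T z))"
      proof -
        have sf: "sigma_finite_measure (distr \<pi> borel T1)"
          using f\<alpha>1 unfolding \<alpha>1_def by (rule fin_sf)
        have pd: "\<alpha>1 \<Otimes>\<^sub>M \<alpha>1 = distr (\<pi> \<Otimes>\<^sub>M \<pi>) (borel \<Otimes>\<^sub>M borel) T"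
          unfolding \<alpha>1_def T_def by (rule pair_measure_distr[OF T1m' T1m' sf])
        have Tm2: "T \<in> (\<pi> \<Otimes>\<^sub>M \<pi>) \<rightarrow>\<^sub>M (borel \<Otimes>\<^sub>M borel)"
          unfolding T_def using T1m' by measurable
        have kd: "k \<in> borel_measurable (distr (\<pi> \<Otimes>\<^sub>M \<pi>) (borel \<Otimes>\<^sub>M borel) T)"
          using km[of borel borel] by simp
        show ?thesis unfolding pd by (rule nn_integral_distr[OF Tm2 kd])
      qed
      finally show ?thesis by (simp add: R_def ac_simps)
    qed
    have ST: "sint (\<alpha> \<Otimes>\<^sub>M \<alpha>) H \<le> sint (\<pi> \<Otimes>\<^sub>M \<pi>) Lam +
       enn2ereal (integral\<^sup>N (\<pi> \<Otimes>\<^sub>M \<pi>) (\<lambda>z. A (T z)) + (\<Sum>i\<in>{0,1,2}. integral\<^sup>N (R i) B))"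
      by (rule sint_transfer[OF Tm Pjm PT Am HL HB split])
    have CA: "integral\<^sup>N (\<pi> \<Otimes>\<^sub>M \<pi>) (\<lambda>z. A (T z)) =
       (\<integral>\<^sup>+z. psi \<phi> ((X.\<rho> (fst z) * X.\<rho> (snd z)) powr p) \<partial>(\<pi>1 \<Otimes>\<^sub>M \<pi>1)) +
       (\<integral>\<^sup>+z. psi \<phi> ((Y.\<rho> (fst z) * Y.\<rho> (snd z)) powr p) \<partial>(\<pi>2 \<Otimes>\<^sub>M \<pi>2))"
    proof -
      have fstm: "fst \<in> \<pi> \<rightarrow>\<^sub>M borel" by (simp add: m\<pi>)
      have sndm: "snd \<in> \<pi> \<rightarrow>\<^sub>M borel" by (simp add: m\<pi>)
      have pd1: "\<pi>1 \<Otimes>\<^sub>M \<pi>1 = distr (\<pi> \<Otimes>\<^sub>M \<pi>) (borel \<Otimes>\<^sub>M borel) (\<lambda>(x, y). (fst x, fst y))"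
        unfolding \<pi>1_def by (rule pair_measure_distr[OF fstm fstm fin_sf[OF f\<pi>1[unfolded \<pi>1_def]]])
      have pd2: "\<pi>2 \<Otimes>\<^sub>M \<pi>2 = distr (\<pi> \<Otimes>\<^sub>M \<pi>) (borel \<Otimes>\<^sub>M borel) (\<lambda>(x, y). (snd x, snd y))"
        unfolding \<pi>2_def by (rule pair_measure_distr[OF sndm sndm fin_sf[OF f\<pi>2[unfolded \<pi>2_def]]])
      have mm1: "(\<lambda>(x, y). (fst x, fst y)) \<in> (\<pi> \<Otimes>\<^sub>M \<pi>) \<rightarrow>\<^sub>M (borel \<Otimes>\<^sub>M borel)"
        using fstm by measurable
      have mm2: "(\<lambda>(x, y). (snd x, snd y)) \<in> (\<pi> \<Otimes>\<^sub>M \<pi>) \<rightarrow>\<^sub>M (borel \<Otimes>\<^sub>M borel)"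
        using sndm by measurable
      have i1: "(\<integral>\<^sup>+z. psi \<phi> ((X.\<rho> (fst z) * X.\<rho> (snd z)) powr p) \<partial>(\<pi>1 \<Otimes>\<^sub>M \<pi>1)) =
          (\<integral>\<^sup>+z. psi \<phi> ((X.\<rho> (fst (fst z)) * X.\<rho> (fst (snd z))) powr p) \<partial>(\<pi> \<Otimes>\<^sub>M \<pi>))"
        unfolding pd1 by (subst nn_integral_distr[OF mm1]) (auto simp: case_prod_beta)
      have i2: "(\<integral>\<^sup>+z. psi \<phi> ((Y.\<rho> (fst z) * Y.\<rho> (snd z)) powr p) \<partial>(\<pi>2 \<Otimes>\<^sub>M \<pi>2)) =
          (\<integral>\<^sup>+z. psi \<phi> ((Y.\<rho> (snd (fst z)) * Y.\<rho> (snd (snd z))) powr p) \<partial>(\<pi> \<Otimes>\<^sub>M \<pi>))"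
        unfolding pd2 by (subst nn_integral_distr[OF mm2]) (auto simp: case_prod_beta)
      have "integral\<^sup>N (\<pi> \<Otimes>\<^sub>M \<pi>) (\<lambda>z. A (T z)) = (\<integral>\<^sup>+z. psi \<phi> ((X.\<rho> (fst (fst z)) * X.\<rho> (fst (snd z))) powr p)
          + psi \<phi> ((Y.\<rho> (snd (fst z)) * Y.\<rho> (snd (snd z))) powr p) \<partial>(\<pi> \<Otimes>\<^sub>M \<pi>))"
        by (intro nn_integral_cong) (auto simp: A_def T_def T1_def split: prod.splits)
      also have "\<dots> = (\<integral>\<^sup>+z. psi \<phi> ((X.\<rho> (fst (fst z)) * X.\<rho> (fst (snd z))) powr p) \<partial>(\<pi> \<Otimes>\<^sub>M \<pi>))
          + (\<integral>\<^sup>+z. psi \<phi> ((Y.\<rho> (snd (fst z)) * Y.\<rho> (snd (snd z))) powr p) \<partial>(\<pi> \<Otimes>\<^sub>M \<pi>))"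
        by (rule nn_integral_add) (simp_all add: m\<pi>\<pi>)
      finally show ?thesis by (simp add: i1 i2)
    qed
    have CB: "(\<Sum>i\<in>{0,1,2}. integral\<^sup>N (R i) B) =
       \<phi> 0 * (emeasure \<mu> X.G * emeasure \<mu> (- X.G) + emeasure \<mu> (- X.G) * emeasure \<mu> X.G + emeasure \<mu> (- X.G) * emeasure \<mu> (- X.G)) +
       \<phi> 0 * (emeasure \<nu> Y.G * emeasure \<nu> (- Y.G) + emeasure \<nu> (- Y.G) * emeasure \<nu> Y.G + emeasure \<nu> (- Y.G) * emeasure \<nu> (- Y.G))"
    proof -
      have Prm: "Pr \<in> borel_measurable X" and Psm: "Ps \<in> borel_measurable X" if "sets X = sets borel" for X
      proof -
        have "Pr \<in> borel_measurable ?E0" "Ps \<in> borel_measurable ?E0" unfolding Pr_def Ps_def by measurable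
        then show "Pr \<in> borel_measurable X" "Ps \<in> borel_measurable X"
          using measurable_cong_sets[OF that[unfolded sE0] refl] by auto
      qed
      have Bint: "integral\<^sup>N (X \<Otimes>\<^sub>M Y) B = \<phi> 0 * (integral\<^sup>N X Pr * integral\<^sup>N Y Pr + integral\<^sup>N X Ps * integral\<^sup>N Y Ps)"
        if XY: "sets X = sets borel" "sets Y = sets borel" "finite_measure X" "finite_measure Y" for X Y
      proof -
        have m1: "(\<lambda>z. Pr (fst z) * Pr (snd z)) \<in> borel_measurable (X \<Otimes>\<^sub>M Y)"
          using Prm[OF XY(1)] Prm[OF XY(2)] by measurable
        have m2: "(\<lambda>z. Ps (fst z) * Ps (snd z)) \<in> borel_measurable (X \<Otimes>\<^sub>M Y)"
          using Psm[OF XY(1)] Psm[OF XY(2)] by measurable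
        have "integral\<^sup>N (X \<Otimes>\<^sub>M Y) B = \<phi> 0 * (\<integral>\<^sup>+z. Pr (fst z) * Pr (snd z) + Ps (fst z) * Ps (snd z) \<partial>(X \<Otimes>\<^sub>M Y))"
          unfolding B_def using m1 m2 by (intro nn_integral_cmult) auto
        also have "(\<integral>\<^sup>+z. Pr (fst z) * Pr (snd z) + Ps (fst z) * Ps (snd z) \<partial>(X \<Otimes>\<^sub>M Y)) =
           (\<integral>\<^sup>+z. Pr (fst z) * Pr (snd z) \<partial>(X \<Otimes>\<^sub>M Y)) + (\<integral>\<^sup>+z. Ps (fst z) * Ps (snd z) \<partial>(X \<Otimes>\<^sub>M Y))"
          using m1 m2 by (rule nn_integral_add)
        also have "(\<integral>\<^sup>+z. Pr (fst z) * Pr (snd z) \<partial>(X \<Otimes>\<^sub>M Y)) = integral\<^sup>N X Pr * integral\<^sup>N Y Pr"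
          by (rule nn_integral_prod_fun[OF XY(3,4) Prm[OF XY(1)] Prm[OF XY(2)]])
        also have "(\<integral>\<^sup>+z. Ps (fst z) * Ps (snd z) \<partial>(X \<Otimes>\<^sub>M Y)) = integral\<^sup>N X Ps * integral\<^sup>N Y Ps"
          by (rule nn_integral_prod_fun[OF XY(3,4) Psm[OF XY(1)] Psm[OF XY(2)]])
        finally show ?thesis .
      qed
      have fstm: "fst \<in> \<pi> \<rightarrow>\<^sub>M borel" by (simp add: m\<pi>)
      have sndm: "snd \<in> \<pi> \<rightarrow>\<^sub>M borel" by (simp add: m\<pi>)
      have Pr1: "integral\<^sup>N \<alpha>1 Pr = emeasure \<mu> X.G"
      proof -
        have "integral\<^sup>N \<alpha>1 Pr = (\<integral>\<^sup>+z. ennreal (X.\<rho> (fst z) powr p) \<partial>\<pi>)"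
          unfolding \<alpha>1_def by (subst nn_integral_distr[OF T1m' Prm[OF sets_distr]]) (simp add: Pr_def T1_def case_prod_beta)
        also have "\<dots> = (\<integral>\<^sup>+x. ennreal (X.\<rho> x powr p) \<partial>\<pi>1)"
          unfolding \<pi>1_def by (subst nn_integral_distr[OF fstm]) auto
        finally show ?thesis by (simp add: X.S1)
      qed
      have Ps1: "integral\<^sup>N \<alpha>1 Ps = emeasure \<nu> Y.G"
      proof -
        have "integral\<^sup>N \<alpha>1 Ps = (\<integral>\<^sup>+z. ennreal (Y.\<rho> (snd z) powr p) \<partial>\<pi>)"
          unfolding \<alpha>1_def by (subst nn_integral_distr[OF T1m' Psm[OF sets_distr]]) (simp add: Ps_def T1_def case_prod_beta)
        also have "\<dots> = (\<integral>\<^sup>+x. ennreal (Y.\<rho> x powr p) \<partial>\<pi>2)"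
          unfolding \<pi>2_def by (subst nn_integral_distr[OF sndm]) auto
        finally show ?thesis by (simp add: Y.S1)
      qed
      have cG: "- X.G \<in> sets \<mu>" "- Y.G \<in> sets \<nu>" using X.Gs Y.Gs s\<mu> s\<nu> by auto
      have Pr2: "integral\<^sup>N \<alpha>2 Pr = emeasure \<mu> (- X.G)"
      proof -
        have "integral\<^sup>N \<alpha>2 Pr = (\<integral>\<^sup>+x. 1 \<partial>\<mu>')"
          unfolding \<alpha>2_def by (subst nn_integral_distr[OF e2m' Prm[OF sets_distr]]) (auto simp: Pr_def e2_def)
        also have "\<dots> = emeasure \<mu>' UNIV" by (simp add: \<mu>'_def)
        also have "\<dots> = emeasure \<mu> (- X.G)" unfolding \<mu>'_def by (rule emeasure_density_indicator_UNIV[OF cG(1)]) simp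
        finally show ?thesis .
      qed
      have Ps2: "integral\<^sup>N \<alpha>2 Ps = 0"
        unfolding \<alpha>2_def by (subst nn_integral_distr[OF e2m' Psm[OF sets_distr]]) (auto simp: Ps_def e2_def)
      have Pr3: "integral\<^sup>N \<alpha>3 Pr = 0"
        unfolding \<alpha>3_def by (subst nn_integral_distr[OF e3m' Prm[OF sets_distr]]) (auto simp: Pr_def e3_def)
      have Ps3: "integral\<^sup>N \<alpha>3 Ps = emeasure \<nu> (- Y.G)"
      proof -
        have "integral\<^sup>N \<alpha>3 Ps = (\<integral>\<^sup>+x. 1 \<partial>\<nu>')"
          unfolding \<alpha>3_def by (subst nn_integral_distr[OF e3m' Psm[OF sets_distr]]) (auto simp: Ps_def e3_def)
        also have "\<dots> = emeasure \<nu>' UNIV" by (simp add: \<nu>'_def)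
        also have "\<dots> = emeasure \<nu> (- Y.G)" unfolding \<nu>'_def by (rule emeasure_density_indicator_UNIV[OF cG(2)]) simp
        finally show ?thesis .
      qed
      have s23: "sets \<alpha>3 = sets \<alpha>2" using s\<alpha>2 s\<alpha>3 by simp
      have Pr\<beta>: "integral\<^sup>N \<beta> Pr = emeasure \<mu> (- X.G)"
        unfolding \<beta>_def by (subst nn_integral_msum[OF s23 Prm[OF s\<alpha>2]]) (simp add: Pr2 Pr3)
      have Ps\<beta>: "integral\<^sup>N \<beta> Ps = emeasure \<nu> (- Y.G)"
        unfolding \<beta>_def by (subst nn_integral_msum[OF s23 Psm[OF s\<alpha>2]]) (simp add: Ps2 Ps3)
      show ?thesis
        unfolding R_def
        by (simp add: Bint[OF s\<alpha>1 s\<beta> f\<alpha>1 f\<beta>] Bint[OF s\<beta> s\<alpha>1 f\<beta> f\<alpha>1] Bint[OF s\<beta> s\<beta> f\<beta> f\<beta>]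
            Pr1 Ps1 Pr\<beta> Ps\<beta> algebra_simps)
    qed
    have CD: "integral\<^sup>N (\<pi> \<Otimes>\<^sub>M \<pi>) (\<lambda>z. A (T z)) + (\<Sum>i\<in>{0,1,2}. integral\<^sup>N (R i) B)
       \<le> D_phi_tensor \<phi> \<pi>1 \<mu> + D_phi_tensor \<phi> \<pi>2 \<nu>"
      unfolding CA CB D_phi_tensor_def using add_mono[OF X.S3 Y.S3] by (simp add: ac_simps)
    have "CGW_obj \<phi> lam \<Delta> p \<alpha> = sint (\<alpha> \<Otimes>\<^sub>M \<alpha>) H" by (simp add: CGW_obj_def H_def)
    also note ST
    also have "sint (\<pi> \<Otimes>\<^sub>M \<pi>) Lam + enn2ereal (integral\<^sup>N (\<pi> \<Otimes>\<^sub>M \<pi>) (\<lambda>z. A (T z)) + (\<Sum>i\<in>{0,1,2}. integral\<^sup>N (R i) B))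
       \<le> sint (\<pi> \<Otimes>\<^sub>M \<pi>) Lam + enn2ereal (D_phi_tensor \<phi> \<pi>1 \<mu> + D_phi_tensor \<phi> \<pi>2 \<nu>)"
      using CD by (intro add_left_mono) (simp add: less_eq_ennreal.rep_eq[symmetric])
    also have "\<dots> = UGW_obj \<phi> lam \<Delta> \<mu> \<nu> \<pi>"
      by (simp add: UGW_obj_def Lam_def \<pi>1_def \<pi>2_def plus_ennreal.rep_eq add.assoc)
    finally show ?thesis .
  qed
  have "CGW \<phi> lam \<Delta> p \<mu> \<nu> \<le> CGW_obj \<phi> lam \<Delta> p \<alpha>"
    unfolding CGW_def using U by (rule INF_lower)
  also note C
  finally show ?thesis .
qed

theorem theorem2:
  fixes \<phi> :: "real \<Rightarrow> ennreal" and lam :: "real \<Rightarrow> real" and p q :: real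
    and \<Delta> :: "real \<Rightarrow> real \<Rightarrow> real"
    and \<mu> :: "'a::polish_space measure" and \<nu> :: "'b::polish_space measure"
  assumes "entropy_fn \<phi>" and "p > 0" and "q > 0" and "dist_on_nonneg \<Delta>"
    and "mm_space \<mu>" and "mm_space \<nu>"
  shows "UGW \<phi> lam \<Delta> \<mu> \<nu> \<ge> CGW \<phi> lam \<Delta> p \<mu> \<nu>"
proof -
  have lsc: "lsc_on_nonneg \<phi>" using assms(1) by (simp add: entropy_fn_def)
  show ?thesis
    unfolding UGW_def
  proof (rule INF_greatest)
    fix \<pi> :: "('a \<times> 'b) measure"
    assume "\<pi> \<in> {\<pi> :: ('a \<times> 'b) measure. sets \<pi> = sets borel \<and> finite_measure \<pi>}"
    then have "sets \<pi> = sets borel" "finite_measure \<pi>" by auto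
    then show "CGW \<phi> lam \<Delta> p \<mu> \<nu> \<le> UGW_obj \<phi> lam \<Delta> \<mu> \<nu> \<pi>"
      by (rule main_bound[OF assms(2) lsc assms(5) assms(6)])
  qed
qed

end
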